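(* Let $k\ge 3$ be an integer and $G$ a 3-connected graph, and let $G''$ be the $\emptyset$-blocked graph of $G$. Then $G''$ is the overlap graph of a family of paths in some tree of maximum degree at most $k$ if and only if $G$ is $k$-colourable. Likewise, $G''$ is the intersection graph of a family of paths in some tree of maximum degree at most $k$ if and only if $G$ is $k$-colourable.
   Context: Paths in a tree are viewed as their node sets. Two sets $a,b$ overlap if $a\cap b\neq\emptyset$, $a\setminus b\neq\emptyset$, $b\setminus a\neq\emptyset$. The overlap (resp. intersection) graph of a family of paths has one vertex per path, two vertices adjacent iff their paths overlap (resp. share a node). The $\emptyset$-blocked graph $G''$ of $G$: let $G'=(V',E')$ be the disjoint union of six copies of $G$. The vertex set of $G''$ is $V_1\cup V_2\cup V_3$ (pairwise disjoint), where $V_1=V'$ (vertex-representatives), $V_2$ contains one new vertex for each edge of $E'$ (edge-representatives), and $V_3=\{f(v): v\in V_1\}$ is a set of new vertices in bijection $f$ with $V_1$ (brothers). Edges of $G''$: $v\in V_1$ is adjacent to the edge-representative of $e\in E'$ iff $v$ is an endpoint of $e$; $V_2\cup V_3$ is a clique; each $v\in V_1$ is adjacent to $f(v)$; no other edges. *)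

theory Defs
  imports Main
begin

definition sgraph :: "'a set \<Rightarrow> 'a set set \<Rightarrow> bool" where
  "sgraph V E \<longleftrightarrow> finite V \<and> (\<forall>e\<in>E. e \<subseteq> V \<and> card e = 2)"

definition connected_on :: "'a set \<Rightarrow> 'a set set \<Rightarrow> bool" where
  "connected_on W E \<longleftrightarrow> W \<noteq> {} \<and>
     (\<forall>u\<in>W. \<forall>v\<in>W. (\<lambda>x y. x \<in> W \<and> y \<in> W \<and> {x, y} \<in> E)\<^sup>*\<^sup>* u v)"

definition k_connected :: "nat \<Rightarrow> 'a set \<Rightarrow> 'a set set \<Rightarrow> bool" where
  "k_connected k V E \<longleftrightarrow> card V > k \<and>
     (\<forall>S \<subseteq> V. card S < k \<longrightarrow> connected_on (V - S) E)"

definition colourable :: "nat \<Rightarrow> 'a set \<Rightarrow> 'a set set \<Rightarrow> bool" where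
  "colourable k V E \<longleftrightarrow> (\<exists>c :: 'a \<Rightarrow> nat. (\<forall>v\<in>V. c v < k) \<and>
     (\<forall>e\<in>E. \<forall>u v. e = {u, v} \<longrightarrow> c u \<noteq> c v))"

definition is_walk :: "'a set \<Rightarrow> 'a set set \<Rightarrow> 'a list \<Rightarrow> bool" where
  "is_walk V E xs \<longleftrightarrow> xs \<noteq> [] \<and> set xs \<subseteq> V \<and>
     (\<forall>i. Suc i < length xs \<longrightarrow> {xs ! i, xs ! Suc i} \<in> E)"

definition has_cycle :: "'a set \<Rightarrow> 'a set set \<Rightarrow> bool" where
  "has_cycle V E \<longleftrightarrow> (\<exists>xs. is_walk V E xs \<and> distinct xs \<and> length xs \<ge> 3 \<and>
     {last xs, hd xs} \<in> E)"

definition is_tree :: "'a set \<Rightarrow> 'a set set \<Rightarrow> bool" where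
  "is_tree V E \<longleftrightarrow> sgraph V E \<and> connected_on V E \<and> \<not> has_cycle V E"

definition max_degree_le :: "nat \<Rightarrow> 'a set \<Rightarrow> 'a set set \<Rightarrow> bool" where
  "max_degree_le k V E \<longleftrightarrow> (\<forall>v\<in>V. card {e\<in>E. v \<in> e} \<le> k)"

definition is_path_set :: "'a set \<Rightarrow> 'a set set \<Rightarrow> 'a set \<Rightarrow> bool" where
  "is_path_set V E P \<longleftrightarrow> (\<exists>xs. is_walk V E xs \<and> distinct xs \<and> set xs = P)"

definition overlap :: "'a set \<Rightarrow> 'a set \<Rightarrow> bool" where
  "overlap a b \<longleftrightarrow> a \<inter> b \<noteq> {} \<and> a - b \<noteq> {} \<and> b - a \<noteq> {}"

text \<open>(V,E) is the overlap (resp. intersection) graph of a family of paths in a tree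
  of maximum degree at most k. Tree nodes are taken from nat (trees are finite,
  so this is no loss of generality).\<close>
definition overlap_path_graph :: "nat \<Rightarrow> 'a set \<Rightarrow> 'a set set \<Rightarrow> bool" where
  "overlap_path_graph k V E \<longleftrightarrow> (\<exists>(T :: nat set) F P. is_tree T F \<and> max_degree_le k T F \<and>
     (\<forall>x\<in>V. is_path_set T F (P x)) \<and>
     (\<forall>x\<in>V. \<forall>y\<in>V. x \<noteq> y \<longrightarrow> ({x, y} \<in> E \<longleftrightarrow> overlap (P x) (P y))))"

definition intersection_path_graph :: "nat \<Rightarrow> 'a set \<Rightarrow> 'a set set \<Rightarrow> bool" where
  "intersection_path_graph k V E \<longleftrightarrow> (\<exists>(T :: nat set) F P. is_tree T F \<and> max_degree_le k T F \<and>
     (\<forall>x\<in>V. is_path_set T F (P x)) \<and>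
     (\<forall>x\<in>V. \<forall>y\<in>V. x \<noteq> y \<longrightarrow> ({x, y} \<in> E \<longleftrightarrow> P x \<inter> P y \<noteq> {})))"

text \<open>The empty-set-blocked graph G'': copies are indexed by i < 6.
  VRep i v: vertex v of copy i; ERep i e: edge-representative of edge e of copy i;
  Bro i v: brother of VRep i v.\<close>
datatype 'a blk = VRep nat 'a | ERep nat "'a set" | Bro nat 'a

definition blocked_V :: "'a set \<Rightarrow> 'a set set \<Rightarrow> 'a blk set" where
  "blocked_V V E = {VRep i v | i v. i < 6 \<and> v \<in> V} \<union> {ERep i e | i e. i < 6 \<and> e \<in> E}
     \<union> {Bro i v | i v. i < 6 \<and> v \<in> V}"

definition blocked_E :: "'a set \<Rightarrow> 'a set set \<Rightarrow> 'a blk set set" where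
  "blocked_E V E =
     {{VRep i v, ERep i e} | i v e. i < 6 \<and> e \<in> E \<and> v \<in> e}
   \<union> {{x, y} | x y. x \<noteq> y \<and>
        x \<in> {ERep i e | i e. i < 6 \<and> e \<in> E} \<union> {Bro i v | i v. i < 6 \<and> v \<in> V} \<and>
        y \<in> {ERep i e | i e. i < 6 \<and> e \<in> E} \<union> {Bro i v | i v. i < 6 \<and> v \<in> V}}
   \<union> {{VRep i v, Bro i v} | i v. i < 6 \<and> v \<in> V}"

end

theory Submission
  imports Defs "HOL-Library.Countable"
begin

definition adj :: "'a set set \<Rightarrow> 'a \<Rightarrow> 'a \<Rightarrow> bool" where "adj F x y \<longleftrightarrow> {x,y} \<in> F"

lemma adj_sym: "adj F x y = adj F y x" by (simp add: adj_def insert_commute)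

lemma adj_sym': "(\<lambda>x y. adj F y x) = adj F" using adj_sym by fastforce

lemma is_walk_succ: "is_walk V E xs \<longleftrightarrow> xs \<noteq> [] \<and> set xs \<subseteq> V \<and> successively (adj E) xs"
  unfolding is_walk_def successively_conv_nth adj_def by auto

definition dw :: "'a set \<Rightarrow> 'a set set \<Rightarrow> 'a \<Rightarrow> 'a \<Rightarrow> 'a list \<Rightarrow> bool" where
 "dw T F x y xs \<longleftrightarrow> xs \<noteq> [] \<and> set xs \<subseteq> T \<and> successively (adj F) xs \<and> distinct xs \<and> hd xs = x \<and> last xs = y"

lemma succ_rev: "successively (adj F) (rev xs) \<longleftrightarrow> successively (adj F) xs"
  by (simp only: successively_rev adj_sym')

lemma dw_rev: "dw T F x y xs \<Longrightarrow> dw T F y x (rev xs)"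
  by (auto simp: dw_def succ_rev hd_rev last_rev simp del: successively_rev)

definition seg :: "'a list \<Rightarrow> nat \<Rightarrow> nat \<Rightarrow> 'a list" where
 "seg xs i j = map (\<lambda>t. xs ! t) (if i \<le> j then [i..<Suc j] else rev [j..<Suc i])"

lemma set_seg: "set (seg xs i j) = (\<lambda>t. xs ! t) ` {min i j..max i j}"
  by (auto simp: seg_def atLeastLessThanSuc_atLeastAtMost simp del: upt_Suc)

lemma seg_dw:
  assumes "dw T F x y xs" "i < length xs" "j < length xs"
  shows "dw T F (xs ! i) (xs ! j) (seg xs i j)"
proof (cases "i \<le> j")
  case True
  have s: "successively (adj F) xs" and d: "distinct xs" using assms by (auto simp: dw_def)
  have "successively (adj F) (map (\<lambda>t. xs ! t) [i..<Suc j])"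
    unfolding successively_conv_nth using s True assms(3)
    by (auto simp: successively_conv_nth nth_append simp del: upt_Suc)
  moreover have "distinct (map (\<lambda>t. xs ! t) [i..<Suc j])"
    using d assms(3) by (auto simp: distinct_map inj_on_def nth_eq_iff_index_eq)
  moreover have "set (map (\<lambda>t. xs ! t) [i..<Suc j]) \<subseteq> T" using assms(1,3) by (auto simp: dw_def)
  ultimately show ?thesis using True by (auto simp: dw_def seg_def hd_map last_map simp del: upt_Suc)
next
  case False
  have s: "successively (adj F) xs" and d: "distinct xs" using assms by (auto simp: dw_def)
  have "successively (adj F) (map (\<lambda>t. xs ! t) [j..<Suc i])"
    unfolding successively_conv_nth using s False assms(2)
    by (auto simp: successively_conv_nth nth_append simp del: upt_Suc)
  moreover have "distinct (map (\<lambda>t. xs ! t) [j..<Suc i])"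
    using d assms(2) by (auto simp: distinct_map inj_on_def nth_eq_iff_index_eq)
  moreover have "set (map (\<lambda>t. xs ! t) [j..<Suc i]) \<subseteq> T" using assms(1,2) by (auto simp: dw_def)
  ultimately have "dw T F (xs ! j) (xs ! i) (map (\<lambda>t. xs ! t) [j..<Suc i])"
    using False by (auto simp: dw_def hd_map last_map simp del: upt_Suc)
  from dw_rev[OF this] show ?thesis using False by (simp add: seg_def rev_map del: upt_Suc)
qed

lemma seg_nth1_lt: "i < j \<Longrightarrow> seg xs i j ! 1 = xs ! Suc i"
  by (simp add: seg_def del: upt_Suc)

lemma seg_nth1_gt: "j < i \<Longrightarrow> seg xs i j ! 1 = xs ! (i - 1)"
  by (simp add: seg_def rev_nth del: upt_Suc)

lemma seg_length: "length (seg xs i j) = Suc (max i j - min i j)"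
  by (auto simp: seg_def simp del: upt_Suc)

lemma dw_concat:
  assumes "dw T F x m a" "dw T F m y b" "set a \<inter> set b = {m}"
  shows "dw T F x y (a @ tl b)"
proof -
  obtain b' where b: "b = m # b'" using assms(2) by (cases b) (auto simp: dw_def)
  show ?thesis using assms unfolding b dw_def
    by (auto simp: successively_append_iff successively_Cons)
qed

lemma shorten:
  "xs \<noteq> [] \<Longrightarrow> set xs \<subseteq> T \<Longrightarrow> successively (adj F) xs \<Longrightarrow> \<exists>ys. dw T F (hd xs) (last xs) ys"
proof (induction "length xs" arbitrary: xs rule: less_induct)
  case less
  show ?case
  proof (cases "distinct xs")
    case True thus ?thesis using less.prems by (auto simp: dw_def)
  next
    case False
    then obtain a b c y where xs: "xs = a @ [y] @ b @ [y] @ c" using not_distinct_decomp by blast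
    let ?ys = "a @ [y] @ c"
    have "length ?ys < length xs" using xs by simp
    moreover have "?ys \<noteq> []" by simp
    moreover have "set ?ys \<subseteq> T" using less.prems xs by auto
    moreover have "successively (adj F) ?ys" using less.prems(3) unfolding xs
      by (cases c) (auto simp: successively_append_iff successively_Cons)
    moreover have "hd ?ys = hd xs" "last ?ys = last xs" using xs by (cases a; cases c; simp)+
    ultimately show ?thesis using less.hyps by metis
  qed
qed

locale tree =
  fixes T :: "'n set" and F :: "'n set set"
  assumes is_tree: "is_tree T F"
begin

lemma sg: "sgraph T F" and conn: "connected_on T F" and nocyc: "\<not> has_cycle T F"
  using is_tree by (auto simp: is_tree_def)

lemma finT: "finite T" using sg by (simp add: sgraph_def)

lemma edge_sub: "e \<in> F \<Longrightarrow> e \<subseteq> T" and edge_card: "e \<in> F \<Longrightarrow> card e = 2"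
  using sg by (auto simp: sgraph_def)

lemma adj_T: "adj F x y \<Longrightarrow> x \<in> T \<and> y \<in> T"
  using edge_sub by (auto simp: adj_def)

lemma adj_neq: "adj F x y \<Longrightarrow> x \<noteq> y"
  using edge_card by (fastforce simp: adj_def)

lemma dw_exists: assumes "x \<in> T" "y \<in> T" shows "\<exists>xs. dw T F x y xs"
proof -
  have "(\<lambda>a b. a \<in> T \<and> b \<in> T \<and> {a, b} \<in> F)\<^sup>*\<^sup>* x y"
    using conn assms by (auto simp: connected_on_def)
  then have "\<exists>xs. xs \<noteq> [] \<and> set xs \<subseteq> T \<and> successively (adj F) xs \<and> hd xs = x \<and> last xs = y"
  proof (induction rule: rtranclp_induct)
    case base thus ?case using assms by (intro exI[of _ "[x]"]) auto
  next
    case (step b c)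
    then obtain xs where "xs \<noteq> [] \<and> set xs \<subseteq> T \<and> successively (adj F) xs \<and> hd xs = x \<and> last xs = b" by blast
    then show ?case using step(2)
      by (intro exI[of _ "xs @ [c]"]) (auto simp: successively_append_iff adj_def)
  qed
  then show ?thesis using shorten by metis
qed

lemma dw_unique: "dw T F x y xs \<Longrightarrow> dw T F x y ys \<Longrightarrow> xs = ys"
proof (induction xs arbitrary: x ys)
  case Nil thus ?case by (simp add: dw_def)
next
  case (Cons a xs')
  hence ax: "a = x" by (simp add: dw_def)
  obtain ys' where ys: "ys = x # ys'" using Cons.prems(2) by (cases ys) (auto simp: dw_def)
  have dx: "distinct (x # xs')" "distinct (x # ys')" using Cons.prems ax ys by (auto simp: dw_def)
  have sx: "successively (adj F) (x # xs')" "successively (adj F) (x # ys')"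
    using Cons.prems ax ys by (auto simp: dw_def)
  have Tx: "set (x # xs') \<subseteq> T" "set (x # ys') \<subseteq> T" using Cons.prems ax ys by (auto simp: dw_def)
  show ?case
  proof (cases "xs' = []")
    case True
    then have "y = x" using Cons.prems ax by (simp add: dw_def)
    then have "ys' = []" using Cons.prems(2) ys dx by (auto simp: dw_def split: if_splits)
    then show ?thesis using True ax ys by simp
  next
    case False
    have ly: "last xs' = y" using Cons.prems(1) False ax by (simp add: dw_def)
    have "ys' \<noteq> []"
    proof
      assume "ys' = []"
      then have "y = x" using Cons.prems(2) ys by (simp add: dw_def)
      then show False using ly False dx by (metis distinct.simps(2) last_in_set)
    qed
    then have ly': "last ys' = y" using Cons.prems(2) ys by (simp add: dw_def)
    show ?thesis
    proof (cases "hd ys' = hd xs'")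
      case True
      have "dw T F (hd xs') y xs'" using Cons.prems(1) False ly ax
        by (auto simp: dw_def successively_Cons)
      moreover have "dw T F (hd xs') y ys'" using Cons.prems(2) \<open>ys' \<noteq> []\<close> ly' ys True
        by (auto simp: dw_def successively_Cons)
      ultimately show ?thesis using Cons.IH ax ys by metis
    next
      case neq: False
      have "y \<in> set ys'" using ly' \<open>ys' \<noteq> []\<close> by auto
      moreover have "y \<in> set xs'" using ly False by auto
      ultimately obtain q z w where xs': "xs' = q @ z # w" and zin: "z \<in> set ys'"
        and qn: "\<forall>u\<in>set q. u \<notin> set ys'"
        using split_list_first_prop[of xs' "\<lambda>u. u \<in> set ys'"] by blast
      obtain s t where ys': "ys' = s @ z # t" using zin split_list by metis
      define cy where "cy = (x # q @ [z]) @ rev s"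
      have "has_cycle T F"
        unfolding has_cycle_def
      proof (intro exI conjI)
        have s1: "successively (adj F) (x # q @ [z])"
          using sx(1) unfolding xs' by (auto simp: successively_append_iff successively_Cons hd_append)
        have s2: "successively (adj F) (s @ [z])"
          using sx(2) unfolding ys' by (auto simp: successively_append_iff successively_Cons)
        have s3: "s \<noteq> [] \<Longrightarrow> adj F z (last s)"
          using s2 by (auto simp: successively_append_iff adj_sym)
        have s4: "successively (adj F) s" using s2 by (simp add: successively_append_iff)
        have "successively (adj F) cy" unfolding cy_def successively_append_iff
          using s1 s4 s3 succ_rev[of F s] by (auto simp: hd_rev simp del: successively_rev)
        moreover have "set cy \<subseteq> T" using Tx unfolding cy_def xs' ys' by auto
        ultimately show "is_walk T F cy" by (simp add: is_walk_succ cy_def)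
        show "distinct cy" unfolding cy_def using dx qn unfolding xs' ys' by auto
        show "3 \<le> length cy"
        proof -
          have "q \<noteq> [] \<or> s \<noteq> []" using neq xs' ys' by auto
          then show ?thesis unfolding cy_def by (auto simp: Suc_le_eq)
        qed
        have "last cy = hd ys'" unfolding cy_def ys' by (cases s) (auto simp: last_rev)
        moreover have "adj F x (hd ys')" using sx(2) \<open>ys' \<noteq> []\<close> by (auto simp: successively_Cons)
        ultimately show "{last cy, hd cy} \<in> F" by (simp add: cy_def adj_def insert_commute)
      qed
      with nocyc show ?thesis by blast
    qed
  qed
qed

definition pth :: "'n \<Rightarrow> 'n \<Rightarrow> 'n list" where
  "pth x y = (THE xs. dw T F x y xs)"

lemma pth_eq: "dw T F x y xs \<Longrightarrow> pth x y = xs"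
  unfolding pth_def using dw_unique by blast

lemma pth: "x \<in> T \<Longrightarrow> y \<in> T \<Longrightarrow> dw T F x y (pth x y)"
  using dw_exists pth_eq by metis

end

context tree begin

lemma dw_ends: "dw T F x y xs \<Longrightarrow> x \<in> set xs \<and> y \<in> set xs \<and> set xs \<subseteq> T"
  by (auto simp: dw_def)

lemma pth_props: "x \<in> T \<Longrightarrow> y \<in> T \<Longrightarrow> x \<in> set (pth x y) \<and> y \<in> set (pth x y) \<and> set (pth x y) \<subseteq> T"
  using pth dw_ends by blast

lemma dw_seg_pth: "dw T F x y xs \<Longrightarrow> i < length xs \<Longrightarrow> j < length xs \<Longrightarrow> pth (xs!i) (xs!j) = seg xs i j"
  using seg_dw pth_eq by metis

lemma conv: assumes "dw T F a b xs" "x \<in> set xs" "y \<in> set xs" shows "set (pth x y) \<subseteq> set xs"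
proof -
  obtain i j where "i < length xs" "j < length xs" "xs ! i = x" "xs ! j = y"
    using assms by (metis in_set_conv_nth)
  then show ?thesis using dw_seg_pth[OF assms(1)] set_seg[of xs i j]
    by (auto simp: min_def max_def split: if_splits)
qed

lemma ps_dw: "is_path_set T F P \<Longrightarrow> \<exists>xs. dw T F (hd xs) (last xs) xs \<and> set xs = P"
  by (auto simp: is_path_set_def is_walk_succ dw_def)

lemma dw_ps: "dw T F x y xs \<Longrightarrow> is_path_set T F (set xs)"
  by (auto simp: is_path_set_def is_walk_succ dw_def)

lemma ps_T: "is_path_set T F P \<Longrightarrow> P \<subseteq> T \<and> P \<noteq> {}"
  by (auto simp: is_path_set_def is_walk_def)

lemma conv_ps: "is_path_set T F P \<Longrightarrow> x \<in> P \<Longrightarrow> y \<in> P \<Longrightarrow> set (pth x y) \<subseteq> P"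
  using ps_dw conv by metis

lemma median:
  assumes "a \<in> T" "b \<in> T" "c \<in> T"
  shows "\<exists>m. m \<in> set (pth a b) \<and> m \<in> set (pth b c) \<and> m \<in> set (pth a c)"
proof -
  define L where "L = pth a b"
  define M where "M = pth a c"
  have dL: "dw T F a b L" and dM: "dw T F a c M" using pth assms L_def M_def by auto
  define S where "S = {t. t < length L \<and> L ! t \<in> set M}"
  have "L ! 0 = a" "M ! 0 = a" "M \<noteq> []" "L \<noteq> []" using dL dM by (auto simp: dw_def hd_conv_nth)
  then have "0 \<in> S" unfolding S_def using nth_mem[of 0 M] by auto
  have finS: "finite S" by (simp add: S_def)
  define i where "i = Max S"
  have iS: "i \<in> S" using Max_in[OF finS] \<open>0 \<in> S\<close> by (auto simp: i_def)
  have imax: "\<And>t. t \<in> S \<Longrightarrow> t \<le> i" using finS by (simp add: i_def)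
  define m where "m = L ! i"
  obtain j where j: "j < length M" "M ! j = m" using iS by (auto simp: S_def m_def in_set_conv_nth)
  have il: "i < length L" using iS by (simp add: S_def)
  have lL: "L ! (length L - 1) = b" and lM: "M ! (length M - 1) = c"
    using dL dM by (auto simp: dw_def last_conv_nth)
  define s1 where "s1 = seg L i (length L - 1)"
  define s2 where "s2 = seg M j (length M - 1)"
  have d1: "dw T F m b s1" using seg_dw[OF dL il, of "length L - 1"] il lL by (simp add: s1_def m_def)
  have d2: "dw T F m c s2" using seg_dw[OF dM j(1), of "length M - 1"] j lM by (simp add: s2_def)
  have "set s1 \<inter> set s2 = {m}"
  proof
    show "set s1 \<inter> set s2 \<subseteq> {m}"
    proof
      fix u assume u: "u \<in> set s1 \<inter> set s2"
      then obtain t where t: "i \<le> t" "t \<le> length L - 1" "u = L ! t"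
        using il by (auto simp: s1_def set_seg min_def max_def split: if_splits)
      have "set s2 \<subseteq> set M" using conv[OF dM, of m c] d2 pth_eq j
        by (metis dM dw_ends nth_mem)
      then have "t \<in> S" using u t il by (auto simp: S_def)
      then have "t = i" using imax t by fastforce
      then show "u \<in> {m}" using t by (simp add: m_def)
    qed
    show "{m} \<subseteq> set s1 \<inter> set s2" using d1 d2 dw_ends by auto
  qed
  then have "dw T F b c (rev s1 @ tl s2)"
    using dw_concat[OF dw_rev[OF d1] d2] by simp
  then have "pth b c = rev s1 @ tl s2" by (rule pth_eq)
  moreover have "m \<in> set s1" using d1 dw_ends by blast
  ultimately have "m \<in> set (pth b c)" by simp
  moreover have "m \<in> set L" using il m_def by simp
  moreover have "m \<in> set M" using j nth_mem by blast
  ultimately show ?thesis using L_def M_def by blast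
qed

lemma helly3:
  assumes "is_path_set T F A" "is_path_set T F B" "is_path_set T F C"
    "A \<inter> B \<noteq> {}" "A \<inter> C \<noteq> {}" "B \<inter> C \<noteq> {}"
  shows "A \<inter> B \<inter> C \<noteq> {}"
proof -
  obtain p where p: "p \<in> B" "p \<in> C" using assms by blast
  obtain q where q: "q \<in> A" "q \<in> C" using assms by blast
  obtain s where s: "s \<in> A" "s \<in> B" using assms by blast
  have T: "p \<in> T" "q \<in> T" "s \<in> T" using p q s ps_T assms by blast+
  obtain m where "m \<in> set (pth p q)" "m \<in> set (pth q s)" "m \<in> set (pth p s)"
    using median[OF T] by blast
  moreover have "set (pth p q) \<subseteq> C" "set (pth q s) \<subseteq> A" "set (pth p s) \<subseteq> B"
    using conv_ps assms p q s by blast+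
  ultimately show ?thesis by blast
qed

lemma path_int:
  assumes "is_path_set T F A" "is_path_set T F B" "A \<inter> B \<noteq> {}"
  shows "is_path_set T F (A \<inter> B)"
proof -
  obtain xs where d: "dw T F (hd xs) (last xs) xs" and A: "set xs = A" using ps_dw assms(1) by blast
  define S where "S = {t. t < length xs \<and> xs ! t \<in> B}"
  have finS: "finite S" and neS: "S \<noteq> {}" using assms(3) A
    by (auto simp: S_def in_set_conv_nth)
  define i where "i = Min S"
  define j where "j = Max S"
  have iS: "i \<in> S" and jS: "j \<in> S" using finS neS by (auto simp: i_def j_def)
  have ij: "\<And>t. t \<in> S \<Longrightarrow> i \<le> t \<and> t \<le> j" using finS by (auto simp: i_def j_def)
  have il: "i < length xs" and jl: "j < length xs" using iS jS by (auto simp: S_def)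
  have "i \<le> j" using ij iS by blast
  have sd: "dw T F (xs!i) (xs!j) (seg xs i j)" using seg_dw[OF d il jl] .
  have "set (seg xs i j) = A \<inter> B"
  proof
    have "set (seg xs i j) \<subseteq> B"
      using conv_ps[OF assms(2), of "xs!i" "xs!j"] iS jS dw_seg_pth[OF d il jl] by (auto simp: S_def)
    moreover have "set (seg xs i j) \<subseteq> A" using A jl \<open>i \<le> j\<close>
      by (auto simp: set_seg)
    ultimately show "set (seg xs i j) \<subseteq> A \<inter> B" by blast
    show "A \<inter> B \<subseteq> set (seg xs i j)"
    proof
      fix u assume "u \<in> A \<inter> B"
      then obtain t where "t < length xs" "xs ! t = u" "u \<in> B" using A by (auto simp: in_set_conv_nth)
      then have "t \<in> S" by (auto simp: S_def)
      then show "u \<in> set (seg xs i j)" using ij \<open>xs ! t = u\<close> \<open>i \<le> j\<close> by (auto simp: set_seg)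
    qed
  qed
  then show ?thesis using dw_ps[OF sd] by simp
qed

lemma helly:
  "finite \<A> \<Longrightarrow> \<A> \<noteq> {} \<Longrightarrow> \<forall>A\<in>\<A>. is_path_set T F A \<Longrightarrow> \<forall>A\<in>\<A>. \<forall>B\<in>\<A>. A \<inter> B \<noteq> {}
   \<Longrightarrow> \<exists>r. \<forall>A\<in>\<A>. r \<in> A"
proof (induction "card \<A>" arbitrary: \<A> rule: less_induct)
  case less
  show ?case
  proof (cases "\<exists>A B. A \<in> \<A> \<and> B \<in> \<A> \<and> A \<noteq> B")
    case False
    then obtain A where "\<A> = {A}" using less.prems(2) by blast
    then show ?thesis using less.prems(4) by auto
  next
    case True
    then obtain A B where AB: "A \<in> \<A>" "B \<in> \<A>" "A \<noteq> B" by blast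
    define \<A>' where "\<A>' = insert (A \<inter> B) (\<A> - {A, B})"
    have "card (\<A> - {A, B}) = card \<A> - 2" using AB less.prems(1) by (simp add: card_Diff_subset)
    moreover have "card {A,B} \<le> card \<A>" using AB less.prems(1) by (intro card_mono) auto
    then have "card \<A> \<ge> 2" using AB by simp
    moreover have "card \<A>' \<le> Suc (card (\<A> - {A, B}))" unfolding \<A>'_def using less.prems(1)
      by (simp add: card_insert_if)
    ultimately have c1: "card \<A>' < card \<A>" by linarith
    have c2: "finite \<A>'" "\<A>' \<noteq> {}" using less.prems(1) by (auto simp: \<A>'_def)
    have c3: "\<forall>C\<in>\<A>'. is_path_set T F C"
      using less.prems path_int AB by (auto simp: \<A>'_def)
    have c4: "\<forall>C\<in>\<A>'. \<forall>D\<in>\<A>'. C \<inter> D \<noteq> {}"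
    proof (intro ballI)
      fix C D assume C: "C \<in> \<A>'" and D: "D \<in> \<A>'"
      have h: "A \<inter> B \<inter> C \<noteq> {}" if "C \<in> \<A>" for C
      proof (rule helly3)
        show "is_path_set T F A" "is_path_set T F B" "is_path_set T F C"
          using less.prems(3) AB that by auto
        show "A \<inter> B \<noteq> {}" "A \<inter> C \<noteq> {}" "B \<inter> C \<noteq> {}"
          using less.prems(4) AB that by auto
      qed
      have h': "\<And>C. C \<in> \<A> \<Longrightarrow> C \<inter> (A \<inter> B) \<noteq> {}"
        using h by (simp add: Int_commute)
      have hAB: "A \<inter> B \<inter> (A \<inter> B) \<noteq> {}" using h[OF AB(1)] by auto
      show "C \<inter> D \<noteq> {}"
      proof (cases "C = A \<inter> B")
        case True
        then show ?thesis using D hAB h unfolding \<A>'_def by auto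
      next
        case False
        then have "C \<in> \<A>" using C unfolding \<A>'_def by auto
        then show ?thesis using D h' less.prems(4) unfolding \<A>'_def by auto
      qed
    qed
    obtain r where "\<forall>C\<in>\<A>'. r \<in> C" using less.hyps[OF c1 c2 c3 c4] by blast
    then show ?thesis by (auto simp: \<A>'_def)
  qed
qed

end

context tree begin

definition br :: "'n \<Rightarrow> 'n \<Rightarrow> 'n" where "br r x = pth r x ! 1"

lemma dw_len2: "dw T F r x L \<Longrightarrow> x \<noteq> r \<Longrightarrow> 2 \<le> length L"
proof (rule ccontr)
  assume "dw T F r x L" "x \<noteq> r" "\<not> 2 \<le> length L"
  then have "length L = 1" by (cases L) (auto simp: dw_def Suc_le_eq)
  then show False using \<open>dw T F r x L\<close> \<open>x \<noteq> r\<close> by (cases L) (auto simp: dw_def)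
qed

lemma dw_nth0: "dw T F r x L \<Longrightarrow> L ! 0 = r"
  by (auto simp: dw_def hd_conv_nth)

lemma dw_nthl: "dw T F r x L \<Longrightarrow> L ! (length L - 1) = x"
  by (auto simp: dw_def last_conv_nth)

lemma br_adj: assumes "r \<in> T" "x \<in> T" "x \<noteq> r" shows "adj F r (br r x)"
proof -
  have d: "dw T F r x (pth r x)" using pth assms by blast
  have "2 \<le> length (pth r x)" using dw_len2[OF d assms(3)] .
  then have "adj F (pth r x ! 0) (pth r x ! Suc 0)"
    using successively_nth[of "adj F" "pth r x" 0] d by (auto simp: dw_def)
  then show ?thesis using dw_nth0[OF d] by (simp add: br_def)
qed

lemma prefix_pth: "dw T F r x L \<Longrightarrow> j < length L \<Longrightarrow> pth r (L ! j) = seg L 0 j"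
  using dw_seg_pth[of r x L 0 j] dw_nth0 by (metis dw_def length_greater_0_conv)

lemma br_prefix: "dw T F r x L \<Longrightarrow> 0 < j \<Longrightarrow> j < length L \<Longrightarrow> br r (L ! j) = L ! 1"
  using prefix_pth seg_nth1_lt by (simp add: br_def)

lemma brsame:
  assumes r: "r \<in> T" and P: "is_path_set T F P" and rP: "r \<notin> P" and x: "x \<in> P" and y: "y \<in> P"
  shows "br r x = br r y"
proof (rule ccontr)
  assume ne: "br r x \<noteq> br r y"
  have xT: "x \<in> T" and yT: "y \<in> T" using ps_T P x y by auto
  define a where "a = pth r x"
  define b where "b = pth r y"
  have da: "dw T F r x a" and db: "dw T F r y b" using pth r xT yT a_def b_def by auto
  have "set a \<inter> set b = {r}"
  proof
    show "set a \<inter> set b \<subseteq> {r}"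
    proof
      fix u assume u: "u \<in> set a \<inter> set b"
      show "u \<in> {r}"
      proof (rule ccontr)
        assume ur: "u \<notin> {r}"
        obtain i j where ij: "i < length a" "a ! i = u" "j < length b" "b ! j = u"
          using u by (auto simp: in_set_conv_nth)
        have "0 < i" using ij ur dw_nth0[OF da] by (cases i) auto
        moreover have "0 < j" using ij ur dw_nth0[OF db] by (cases j) auto
        ultimately have "br r u = a ! 1" "br r u = b ! 1"
          using br_prefix[OF da, of i] br_prefix[OF db, of j] ij by auto
        then show False using ne by (simp add: br_def a_def b_def)
      qed
    qed
    show "{r} \<subseteq> set a \<inter> set b" using da db dw_ends by auto
  qed
  then have "dw T F x y (rev a @ tl b)" using dw_concat[OF dw_rev[OF da] db] by simp
  then have "pth x y = rev a @ tl b" by (rule pth_eq)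
  moreover have "r \<in> set a" using da dw_ends by auto
  ultimately have "r \<in> set (pth x y)" by simp
  then show False using conv_ps[OF P x y] rP by blast
qed

lemma comp:
  assumes Q: "is_path_set T F Q" and rQ: "r \<in> Q" and xQ: "x \<in> Q" and yQ: "y \<in> Q"
    and xr: "x \<noteq> r" and yr: "y \<noteq> r" and b: "br r x = br r y"
  shows "x \<in> set (pth r y) \<or> y \<in> set (pth r x)"
proof -
  obtain xs where d: "dw T F (hd xs) (last xs) xs" and Qs: "set xs = Q" using ps_dw Q by blast
  obtain ir ix iy where i: "ir < length xs" "xs ! ir = r" "ix < length xs" "xs ! ix = x"
    "iy < length xs" "xs ! iy = y"
    using rQ xQ yQ Qs by (metis in_set_conv_nth)
  have py: "pth r y = seg xs ir iy" and px: "pth r x = seg xs ir ix"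
    using dw_seg_pth[OF d] i by metis+
  have "ix \<noteq> ir" "iy \<noteq> ir" using i xr yr by auto
  then have "(min ir iy \<le> ix \<and> ix \<le> max ir iy) \<or> (min ir ix \<le> iy \<and> iy \<le> max ir ix)
     \<or> (ix < ir \<and> ir < iy) \<or> (iy < ir \<and> ir < ix)" by (auto simp: min_def max_def)
  moreover
  have dis: "distinct xs" using d by (simp add: dw_def)
  have "\<not> (ix < ir \<and> ir < iy)"
  proof
    assume h: "ix < ir \<and> ir < iy"
    then have "br r x = xs ! (ir - 1)" "br r y = xs ! Suc ir"
      using px py seg_nth1_gt seg_nth1_lt by (auto simp: br_def)
    moreover have "xs ! (ir - 1) \<noteq> xs ! Suc ir" using dis h i
      by (subst nth_eq_iff_index_eq) auto
    ultimately show False using b by simp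
  qed
  moreover have "\<not> (iy < ir \<and> ir < ix)"
  proof
    assume h: "iy < ir \<and> ir < ix"
    then have "br r y = xs ! (ir - 1)" "br r x = xs ! Suc ir"
      using px py seg_nth1_gt seg_nth1_lt by (auto simp: br_def)
    moreover have "xs ! (ir - 1) \<noteq> xs ! Suc ir" using dis h i
      by (subst nth_eq_iff_index_eq) auto
    ultimately show False using b by simp
  qed
  ultimately have "(min ir iy \<le> ix \<and> ix \<le> max ir iy) \<or> (min ir ix \<le> iy \<and> iy \<le> max ir ix)"
    by blast
  then show ?thesis
  proof
    assume "min ir iy \<le> ix \<and> ix \<le> max ir iy"
    then have "x \<in> (\<lambda>t. xs ! t) ` {min ir iy..max ir iy}" using i(4) by force
    then show ?thesis unfolding py set_seg by blast
  next
    assume "min ir ix \<le> iy \<and> iy \<le> max ir ix"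
    then have "y \<in> (\<lambda>t. xs ! t) ` {min ir ix..max ir ix}" using i(6) by force
    then show ?thesis unfolding px set_seg by blast
  qed
qed

lemma pre:
  assumes "r \<in> T" "x \<in> T" "z \<in> set (pth r y)" "y \<in> set (pth r x)"
  shows "y \<in> set (pth z x)"
proof -
  define L where "L = pth r x"
  have d: "dw T F r x L" using pth assms L_def by auto
  obtain j where j: "j < length L" "L ! j = y" using assms(4) L_def by (auto simp: in_set_conv_nth)
  have "pth r y = seg L 0 j" using prefix_pth[OF d j(1)] j by simp
  then obtain i where i: "i \<le> j" "L ! i = z" using assms(3) by (auto simp: set_seg)
  have "pth z x = seg L i (length L - 1)"
    using dw_seg_pth[OF d, of i "length L - 1"] i j dw_nthl[OF d] by auto
  then show ?thesis using i j by (auto simp: set_seg)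
qed

end

lemma not_overlap_nested: "\<not> overlap A B \<Longrightarrow> A \<inter> B \<noteq> {} \<Longrightarrow> A \<subseteq> B \<or> B \<subseteq> A"
  by (auto simp: overlap_def)

lemma chain_core:
  assumes "r \<in> Ab" "r \<in> Ba" "r \<in> Bc" "Aa \<subseteq> Ab" "Ab \<subseteq> Ac"
    "overlap Aa Ba" "overlap Ac Bc" "\<not> overlap Ba Ab" "\<not> overlap Bc Ab" "overlap Ba Bc"
  shows False
proof -
  have "Ba \<subseteq> Ab \<or> Ab \<subseteq> Ba" using not_overlap_nested assms by blast
  then have "Ba \<subseteq> Ab" using assms(4,6) by (auto simp: overlap_def)
  have "Bc \<subseteq> Ab \<or> Ab \<subseteq> Bc" using not_overlap_nested assms by blast
  then have "Ab \<subseteq> Bc" using assms(5,7) by (auto simp: overlap_def)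
  show False using \<open>Ba \<subseteq> Ab\<close> \<open>Ab \<subseteq> Bc\<close> assms(10) by (auto simp: overlap_def)
qed

lemma chain3:
  fixes A B :: "nat \<Rightarrow> 'x set"
  assumes h1: "\<And>i. i < 3 \<Longrightarrow> r \<in> A i \<and> r \<in> B i \<and> overlap (A i) (B i)"
    and h2: "\<And>i j. i < 3 \<Longrightarrow> j < 3 \<Longrightarrow> i \<noteq> j \<Longrightarrow>
       \<not> overlap (A i) (A j) \<and> \<not> overlap (B i) (A j) \<and> overlap (B i) (B j)"
  shows False
proof -
  have cmp: "A i \<subseteq> A j \<or> A j \<subseteq> A i" if "i < 3" "j < 3" for i j
  proof (cases "i = j")
    case False
    have "r \<in> A i" "r \<in> A j" using h1 that by auto
    moreover have "\<not> overlap (A i) (A j)" using h2 that False by auto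
    ultimately show ?thesis using not_overlap_nested[of "A i" "A j"] by blast
  qed simp
  have core: "False" if "a < 3" "b < 3" "c < 3" "a \<noteq> b" "b \<noteq> c" "a \<noteq> c"
    "A a \<subseteq> A b" "A b \<subseteq> A c" for a b c
  proof (rule chain_core[of r "A b" "B a" "B c" "A a" "A c"])
    show "r \<in> A b" "r \<in> B a" "r \<in> B c" "overlap (A a) (B a)" "overlap (A c) (B c)"
      using h1 that by auto
    show "\<not> overlap (B a) (A b)" "\<not> overlap (B c) (A b)" "overlap (B a) (B c)"
      using h2 that by auto
  qed (use that in auto)
  have "A 0 \<subseteq> A 1 \<or> A 1 \<subseteq> A 0" "A 1 \<subseteq> A 2 \<or> A 2 \<subseteq> A 1" "A 0 \<subseteq> A 2 \<or> A 2 \<subseteq> A 0"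
    using cmp by auto
  moreover have "\<not> (A 0 \<subseteq> A 1 \<and> A 1 \<subseteq> A 2)" "\<not> (A 0 \<subseteq> A 2 \<and> A 2 \<subseteq> A 1)"
    "\<not> (A 1 \<subseteq> A 0 \<and> A 0 \<subseteq> A 2)" "\<not> (A 1 \<subseteq> A 2 \<and> A 2 \<subseteq> A 0)"
    "\<not> (A 2 \<subseteq> A 0 \<and> A 0 \<subseteq> A 1)" "\<not> (A 2 \<subseteq> A 1 \<and> A 1 \<subseteq> A 0)"
    using core[of 0 1 2] core[of 0 2 1] core[of 1 0 2] core[of 1 2 0] core[of 2 0 1] core[of 2 1 0]
    by auto
  ultimately show False by blast
qed

context tree begin

lemma br_on_pth: assumes "r \<in> T" "y \<in> T" "z \<in> set (pth r y)" "z \<noteq> r" shows "br r z = br r y"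
proof -
  have d: "dw T F r y (pth r y)" using pth assms by blast
  obtain j where j: "j < length (pth r y)" "pth r y ! j = z" using assms(3) by (auto simp: in_set_conv_nth)
  have "0 < j" using j assms(4) dw_nth0[OF d] by (cases j) auto
  then show ?thesis using br_prefix[OF d \<open>0 < j\<close> j(1)] j(2) by (simp add: br_def)
qed

lemma norm_sub: "\<not> overlap Q P \<Longrightarrow> Q \<inter> P \<noteq> {} \<Longrightarrow> r \<in> Q \<Longrightarrow> r \<notin> P \<Longrightarrow> P \<subseteq> Q"
  using not_overlap_nested by blast

lemma half_ov:
  assumes r: "r \<in> T" and ps: "is_path_set T F Pu" "is_path_set T F Pv" "is_path_set T F Qe"
    "is_path_set T F Qu" "is_path_set T F Qv"
    and rn: "r \<notin> Pu" "r \<notin> Pv" and ri: "r \<in> Qe" "r \<in> Qu" "r \<in> Qv"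
    and ov: "overlap Qe Pu" "overlap Qu Pu" "overlap Qv Pv"
    and nov: "\<not> overlap Pu Pv" "\<not> overlap Qv Pu" "\<not> overlap Qu Pv"
    and y: "y \<in> Qe" "y \<in> Pv" "y \<in> Qv" and z: "z \<in> Pu"
    and zy: "z \<in> set (pth r y)"
  shows False
proof -
  have yT: "y \<in> T" using ps_T ps(2) y by blast
  have "set (pth r y) \<subseteq> Qv" using conv_ps[OF ps(5) ri(3) y(3)] .
  then have "Qv \<inter> Pu \<noteq> {}" using zy z by blast
  then have PuQv: "Pu \<subseteq> Qv" using norm_sub[OF nov(2) _ ri(3) rn(1)] by blast
  obtain x where x: "x \<in> Pu" "x \<notin> Qe" using ov(1) by (auto simp: overlap_def)
  have xr: "x \<noteq> r" "y \<noteq> r" "z \<noteq> r" using x z rn y by auto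
  have xT: "x \<in> T" using ps_T ps(1) x by blast
  have "br r x = br r z" using brsame[OF r ps(1) rn(1) x(1) z] .
  also have "... = br r y" using br_on_pth[OF r yT zy xr(3)] .
  finally have bxy: "br r x = br r y" .
  have xQv: "x \<in> Qv" using PuQv x by blast
  have "x \<in> set (pth r y) \<or> y \<in> set (pth r x)"
    by (rule comp[OF ps(5) ri(3) xQv y(3) xr(1,2) bxy])
  moreover have "set (pth r y) \<subseteq> Qe" using conv_ps[OF ps(3) ri(1) y(1)] .
  ultimately have "y \<in> set (pth r x)" using x by blast
  then have "y \<in> set (pth z x)" by (rule pre[OF r xT zy])
  then have yPu: "y \<in> Pu" using conv_ps[OF ps(1) z x(1)] by blast
  have "Pu \<subseteq> Pv \<or> Pv \<subseteq> Pu" using not_overlap_nested[OF nov(1)] yPu y by blast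
  then show False
  proof
    assume "Pv \<subseteq> Pu"
    then show False using PuQv ov(3) by (auto simp: overlap_def)
  next
    assume PuPv: "Pu \<subseteq> Pv"
    have "Qu \<inter> Pu \<noteq> {}" using ov(2) by (auto simp: overlap_def)
    then have "Qu \<inter> Pv \<noteq> {}" using PuPv by blast
    then have "Pv \<subseteq> Qu" using norm_sub[OF nov(3) _ ri(2) rn(2)] by blast
    then show False using PuPv ov(2) by (auto simp: overlap_def)
  qed
qed

lemma samebr_ov:
  assumes r: "r \<in> T" and ps: "is_path_set T F Pu" "is_path_set T F Pv" "is_path_set T F Qe"
    "is_path_set T F Qu" "is_path_set T F Qv"
    and rn: "r \<notin> Pu" "r \<notin> Pv" and ri: "r \<in> Qe" "r \<in> Qu" "r \<in> Qv"
    and ov: "overlap Qe Pu" "overlap Qe Pv" "overlap Qu Pu" "overlap Qv Pv"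
    and nov: "\<not> overlap Pu Pv" "\<not> overlap Qv Pu" "\<not> overlap Qu Pv"
    and ab: "a \<in> Pu" "b \<in> Pv" "br r a = br r b"
  shows False
proof -
  have "Qe \<inter> Pv \<inter> Qv \<noteq> {}"
    using helly3[OF ps(3) ps(2) ps(5)] ov(2,4) ri(1,3) by (auto simp: overlap_def)
  then obtain y where y: "y \<in> Qe" "y \<in> Pv" "y \<in> Qv" by blast
  have "Qe \<inter> Pu \<inter> Qu \<noteq> {}"
    using helly3[OF ps(3) ps(1) ps(4)] ov(1,3) ri(1,2) by (auto simp: overlap_def)
  then obtain z where z: "z \<in> Qe" "z \<in> Pu" "z \<in> Qu" by blast
  have yr: "y \<noteq> r" "z \<noteq> r" using y z rn by auto
  have "br r z = br r a" using brsame[OF r ps(1) rn(1) z(2) ab(1)] .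
  also have "... = br r b" by (rule ab(3))
  also have "... = br r y" using brsame[OF r ps(2) rn(2) ab(2) y(2)] .
  finally have "br r z = br r y" .
  then have "z \<in> set (pth r y) \<or> y \<in> set (pth r z)"
    using comp[OF ps(3) ri(1) z(1) y(1) yr(2) yr(1)] by blast
  then show False
  proof
    assume "z \<in> set (pth r y)"
    then show False by (rule half_ov[OF r ps rn ri ov(1,3,4) nov y z(2)])
  next
    assume yz: "y \<in> set (pth r z)"
    have nv: "\<not> overlap Pv Pu" using nov(1) by (auto simp: overlap_def)
    show False
      by (rule half_ov[OF r ps(2,1,3,5,4) rn(2,1) ri(1,3,2) ov(2,4,3) nv nov(3,2) z(1,2,3) y(2) yz])
  qed
qed

lemma samebr_int:
  assumes r: "r \<in> T" and ps: "is_path_set T F Pu" "is_path_set T F Pv" "is_path_set T F Qe"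
    "is_path_set T F Qu" "is_path_set T F Qv"
    and rn: "r \<notin> Pu" "r \<notin> Pv" and ri: "r \<in> Qe" "r \<in> Qu" "r \<in> Qv"
    and ov: "Qe \<inter> Pu \<noteq> {}" "Qe \<inter> Pv \<noteq> {}" "Qu \<inter> Pu \<noteq> {}" "Qv \<inter> Pv \<noteq> {}"
    and nov: "Qv \<inter> Pu = {}" "Qu \<inter> Pv = {}"
    and ab: "a \<in> Pu" "b \<in> Pv" "br r a = br r b"
  shows False
proof -
  have "Qe \<inter> Pv \<inter> Qv \<noteq> {}"
    using helly3[OF ps(3) ps(2) ps(5)] ov(2,4) ri(1,3) by (auto)
  then obtain y where y: "y \<in> Qe" "y \<in> Pv" "y \<in> Qv" by blast
  have "Qe \<inter> Pu \<inter> Qu \<noteq> {}"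
    using helly3[OF ps(3) ps(1) ps(4)] ov(1,3) ri(1,2) by (auto)
  then obtain z where z: "z \<in> Qe" "z \<in> Pu" "z \<in> Qu" by blast
  have yr: "y \<noteq> r" "z \<noteq> r" using y z rn by auto
  have "br r z = br r a" using brsame[OF r ps(1) rn(1) z(2) ab(1)] .
  also have "... = br r b" by (rule ab(3))
  also have "... = br r y" using brsame[OF r ps(2) rn(2) ab(2) y(2)] .
  finally have "br r z = br r y" .
  then have "z \<in> set (pth r y) \<or> y \<in> set (pth r z)"
    using comp[OF ps(3) ri(1) z(1) y(1) yr(2) yr(1)] by blast
  then show False
  proof
    assume "z \<in> set (pth r y)"
    then show False using conv_ps[OF ps(5) ri(3) y(3)] z nov(1) by blast
  next
    assume "y \<in> set (pth r z)"
    then show False using conv_ps[OF ps(4) ri(2) z(3)] y nov(2) by blast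
  qed
qed

end

definition Kset :: "'a set \<Rightarrow> 'a set set \<Rightarrow> 'a blk set" where
  "Kset V E = {ERep i e | i e. i < 6 \<and> e \<in> E} \<union> {Bro i v | i v. i < 6 \<and> v \<in> V}"

lemma bE_ve: "i < 6 \<Longrightarrow> e \<in> E \<Longrightarrow> v \<in> e \<Longrightarrow> {VRep i v, ERep i e} \<in> blocked_E V E"
  unfolding blocked_E_def by (intro UnI1 CollectI) blast

lemma bE_vb: "i < 6 \<Longrightarrow> v \<in> V \<Longrightarrow> {VRep i v, Bro i v} \<in> blocked_E V E"
  unfolding blocked_E_def by (intro UnI2 CollectI) blast

lemma bE_K: "x \<in> Kset V E \<Longrightarrow> y \<in> Kset V E \<Longrightarrow> x \<noteq> y \<Longrightarrow> {x, y} \<in> blocked_E V E"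
  unfolding blocked_E_def Kset_def
  apply (rule UnI1, rule UnI2)
  apply (simp only: mem_Collect_eq)
  apply (rule exI[of _ x], rule exI[of _ y])
  by simp

lemma nbE_vv: "{VRep i v, VRep j w} \<notin> blocked_E V E"
  unfolding blocked_E_def Un_iff mem_Collect_eq
  by (auto simp: doubleton_eq_iff)

lemma nbE_vb: "(i, v) \<noteq> (j, w) \<Longrightarrow> {VRep i v, Bro j w} \<notin> blocked_E V E"
  unfolding blocked_E_def Un_iff mem_Collect_eq
  by (auto simp: doubleton_eq_iff)

lemma K_sub: "Kset V E \<subseteq> blocked_V V E"
  unfolding blocked_V_def Kset_def by blast

lemma V_in: "i < 6 \<Longrightarrow> v \<in> V \<Longrightarrow> VRep i v \<in> blocked_V V E"
  unfolding blocked_V_def by blast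

lemma finite_K: assumes "sgraph V E" shows "finite (Kset V E)"
proof -
  have fV: "finite V" using assms by (simp add: sgraph_def)
  have "E \<subseteq> Pow V" using assms by (auto simp: sgraph_def)
  then have fE: "finite E" using fV finite_subset by blast
  have "Kset V E = (\<lambda>(i, e). ERep i e) ` ({..<6} \<times> E) \<union> (\<lambda>(i, v). Bro i v) ` ({..<6} \<times> V)"
    unfolding Kset_def by auto
  then show ?thesis using fV fE by simp
qed

lemma overlap_sym: "overlap a b = overlap b a" by (auto simp: overlap_def)

context tree begin

lemma colour_lemma:
  fixes V :: "'a set" and E :: "'a set set" and Pv :: "'a \<Rightarrow> 'n set"
  assumes r: "r \<in> T" and deg: "max_degree_le k T F" and G: "sgraph V E"
    and P: "\<And>v. v \<in> V \<Longrightarrow> is_path_set T F (Pv v) \<and> r \<notin> Pv v"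
    and nb: "\<And>u v a b. {u, v} \<in> E \<Longrightarrow> u \<in> V \<Longrightarrow> v \<in> V \<Longrightarrow> u \<noteq> v \<Longrightarrow> a \<in> Pv u \<Longrightarrow> b \<in> Pv v
       \<Longrightarrow> br r a \<noteq> br r b"
  shows "colourable k V E"
proof -
  define N where "N = {s. adj F r s}"
  have NT: "N \<subseteq> T" using adj_T by (auto simp: N_def)
  then have finN: "finite N" using finT finite_subset by blast
  have finF: "finite F"
  proof -
    have "F \<subseteq> Pow T" using edge_sub by auto
    then show ?thesis using finT finite_subset by blast
  qed
  have "card N \<le> card {e \<in> F. r \<in> e}"
  proof (rule card_inj_on_le)
    show "inj_on (\<lambda>s. {r, s}) N"
      using adj_neq by (auto simp: inj_on_def N_def doubleton_eq_iff)
    show "(\<lambda>s. {r, s}) ` N \<subseteq> {e \<in> F. r \<in> e}" by (auto simp: N_def adj_def)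
    show "finite {e \<in> F. r \<in> e}" using finF by simp
  qed
  also have "... \<le> k" using deg r by (auto simp: max_degree_le_def)
  finally have cN: "card N \<le> k" .
  obtain h where h: "bij_betw h N {0..<card N}" using ex_bij_betw_finite_nat[OF finN] by blast
  define pick where "pick v = (SOME y. y \<in> Pv v)" for v
  have pick: "pick v \<in> Pv v" if "v \<in> V" for v
    using P[OF that] ps_T unfolding pick_def by (metis equals0I someI_ex)
  have brN: "br r (pick v) \<in> N" if "v \<in> V" for v
  proof -
    have "pick v \<in> T" "pick v \<noteq> r" using pick[OF that] P[OF that] ps_T by auto
    then show ?thesis using br_adj[OF r] by (auto simp: N_def)
  qed
  define c where "c v = h (br r (pick v))" for v
  show ?thesis unfolding colourable_def
  proof (intro exI conjI ballI allI impI)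
    fix v assume "v \<in> V"
    then have "c v < card N" using brN h by (auto simp: c_def bij_betw_def)
    then show "c v < k" using cN by simp
  next
    fix e u v assume e: "e \<in> E" "e = {u, v}"
    have uv: "u \<in> V" "v \<in> V" "u \<noteq> v" using G e by (auto simp: sgraph_def)
    show "c u \<noteq> c v"
    proof
      assume "c u = c v"
      then have "br r (pick u) = br r (pick v)"
        using h brN uv by (auto simp: c_def bij_betw_def inj_on_def)
      then show False using nb[of u v "pick u" "pick v"] e uv pick by auto
    qed
  qed
qed

end

lemma hard_ov:
  assumes G: "sgraph V E" and Vne: "V \<noteq> {}"
    and H: "overlap_path_graph k (blocked_V V E) (blocked_E V E)"
  shows "colourable k V E"
proof -
  obtain T :: "nat set" and F P where tr: "is_tree T F" and deg: "max_degree_le k T F"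
    and ps: "\<forall>x\<in>blocked_V V E. is_path_set T F (P x)"
    and rep: "\<forall>x\<in>blocked_V V E. \<forall>y\<in>blocked_V V E. x \<noteq> y \<longrightarrow> ({x, y} \<in> blocked_E V E \<longleftrightarrow> overlap (P x) (P y))"
    using H unfolding overlap_path_graph_def by blast
  interpret tree T F using tr by unfold_locales
  have repl: "{x, y} \<in> blocked_E V E \<longleftrightarrow> overlap (P x) (P y)"
    if "x \<in> blocked_V V E" "y \<in> blocked_V V E" "x \<noteq> y" for x y
    using rep that by blast
  have BroK: "\<And>i v. i < 6 \<Longrightarrow> v \<in> V \<Longrightarrow> Bro i v \<in> Kset V E" by (auto simp: Kset_def)
  have ERK: "\<And>i e. i < 6 \<Longrightarrow> e \<in> E \<Longrightarrow> ERep i e \<in> Kset V E" by (auto simp: Kset_def)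
  have BV: "\<And>x. x \<in> Kset V E \<Longrightarrow> x \<in> blocked_V V E" using K_sub by blast
  have psK: "\<And>x. x \<in> Kset V E \<Longrightarrow> is_path_set T F (P x)" using ps BV by blast
  have ovK: "overlap (P x) (P y)" if "x \<in> Kset V E" "y \<in> Kset V E" "x \<noteq> y" for x y
    using repl[OF BV[OF that(1)] BV[OF that(2)] that(3)] bE_K[OF that] by blast
  obtain v0 where v0: "v0 \<in> V" using Vne by blast
  have "\<exists>r. \<forall>A\<in>P ` Kset V E. r \<in> A"
  proof (rule helly)
    show "finite (P ` Kset V E)" using finite_K[OF G] by simp
    show "P ` Kset V E \<noteq> {}" using BroK[of 0 v0] v0 by auto
    show "\<forall>A\<in>P ` Kset V E. is_path_set T F A" using psK by blast
    show "\<forall>A\<in>P ` Kset V E. \<forall>B\<in>P ` Kset V E. A \<inter> B \<noteq> {}"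
    proof (intro ballI)
      fix A B assume "A \<in> P ` Kset V E" "B \<in> P ` Kset V E"
      then obtain x y where xy: "x \<in> Kset V E" "y \<in> Kset V E" "A = P x" "B = P y" by blast
      show "A \<inter> B \<noteq> {}"
      proof (cases "x = y")
        case True then show ?thesis using xy psK ps_T by auto
      next
        case False then show ?thesis using xy ovK by (auto simp: overlap_def)
      qed
    qed
  qed
  then obtain r where rK: "\<And>x. x \<in> Kset V E \<Longrightarrow> r \<in> P x" by blast
  have rT: "r \<in> T" using rK[OF BroK[of 0 v0]] psK[OF BroK[of 0 v0]] ps_T v0 by auto
  have VV: "\<And>i v. i < 6 \<Longrightarrow> v \<in> V \<Longrightarrow> VRep i v \<in> blocked_V V E" by (rule V_in)
  have "\<exists>i<3. \<forall>v\<in>V. r \<notin> P (VRep i v)"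
  proof (rule ccontr)
    assume "\<not> ?thesis"
    then have "\<forall>i<3. \<exists>v\<in>V. r \<in> P (VRep i v)" by blast
    then have "\<forall>i. \<exists>v. i < 3 \<longrightarrow> v \<in> V \<and> r \<in> P (VRep i v)" by blast
    then obtain vs where vs0: "\<forall>i. i < 3 \<longrightarrow> vs i \<in> V \<and> r \<in> P (VRep i (vs i))"
      by (rule choice[THEN exE]) blast
    have vs: "\<And>i. i < 3 \<Longrightarrow> vs i \<in> V \<and> r \<in> P (VRep i (vs i))" using vs0 by blast
    show False
    proof (rule chain3[of r "\<lambda>i. P (VRep i (vs i))" "\<lambda>i. P (Bro i (vs i))"])
      fix i :: nat assume i: "i < 3"
      have a: "vs i \<in> V" "i < 6" using vs i by auto
      have "overlap (P (VRep i (vs i))) (P (Bro i (vs i)))"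
        using repl[OF VV[OF a(2,1)] BV[OF BroK[OF a(2,1)]]] bE_vb[OF a(2,1)] by simp
      then show "r \<in> P (VRep i (vs i)) \<and> r \<in> P (Bro i (vs i)) \<and>
          overlap (P (VRep i (vs i))) (P (Bro i (vs i)))"
        using vs[OF i] rK[OF BroK[OF a(2,1)]] by simp
    next
      fix i j :: nat assume ij: "i < 3" "j < 3" "i \<noteq> j"
      have a: "vs i \<in> V" "i < 6" "vs j \<in> V" "j < 6" using vs ij by auto
      have "\<not> overlap (P (VRep i (vs i))) (P (VRep j (vs j)))"
        using repl[OF VV[OF a(2,1)] VV[OF a(4,3)]] nbE_vv[of i "vs i" j "vs j" V E] ij(3) by simp
      moreover have "\<not> overlap (P (Bro i (vs i))) (P (VRep j (vs j)))"
        using repl[OF VV[OF a(4,3)] BV[OF BroK[OF a(2,1)]]] nbE_vb[of j "vs j" i "vs i" V E] ij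
        by (simp add: overlap_sym)
      moreover have "overlap (P (Bro i (vs i))) (P (Bro j (vs j)))"
        using ovK[OF BroK[OF a(2,1)] BroK[OF a(4,3)]] ij(3) by simp
      ultimately show "\<not> overlap (P (VRep i (vs i))) (P (VRep j (vs j))) \<and>
         \<not> overlap (P (Bro i (vs i))) (P (VRep j (vs j))) \<and> overlap (P (Bro i (vs i))) (P (Bro j (vs j)))"
        by blast
    qed
  qed
  then obtain i where i: "i < 3" "\<And>v. v \<in> V \<Longrightarrow> r \<notin> P (VRep i v)" by blast
  have i6: "i < 6" using i by simp
  show ?thesis
  proof (rule colour_lemma[OF rT deg G, of "\<lambda>v. P (VRep i v)"])
    show "\<And>v. v \<in> V \<Longrightarrow> is_path_set T F (P (VRep i v)) \<and> r \<notin> P (VRep i v)"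
      using ps VV[OF i6] i by blast
  next
    fix u v a b assume uv: "{u, v} \<in> E" "u \<in> V" "v \<in> V" "u \<noteq> v" and ab: "a \<in> P (VRep i u)" "b \<in> P (VRep i v)"
    show "br r a \<noteq> br r b"
    proof
      assume bab: "br r a = br r b"
      define e where "e = {u, v}"
      have e: "e \<in> E" "u \<in> e" "v \<in> e" using uv by (auto simp: e_def)
      have vu: "VRep i u \<in> blocked_V V E" "VRep i v \<in> blocked_V V E"
        "ERep i e \<in> blocked_V V E" "Bro i u \<in> blocked_V V E" "Bro i v \<in> blocked_V V E"
        using VV[OF i6] BV BroK ERK i6 e uv by auto
      have ov1: "overlap (P (ERep i e)) (P (VRep i u))"
        using repl[OF vu(1) vu(3)] bE_ve[OF i6 e(1,2)] by (simp add: overlap_sym)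
      have ov2: "overlap (P (ERep i e)) (P (VRep i v))"
        using repl[OF vu(2) vu(3)] bE_ve[OF i6 e(1,3)] by (simp add: overlap_sym)
      have ov3: "overlap (P (Bro i u)) (P (VRep i u))"
        using repl[OF vu(1) vu(4)] bE_vb[OF i6 uv(2)] by (simp add: overlap_sym)
      have ov4: "overlap (P (Bro i v)) (P (VRep i v))"
        using repl[OF vu(2) vu(5)] bE_vb[OF i6 uv(3)] by (simp add: overlap_sym)
      have nov1: "\<not> overlap (P (VRep i u)) (P (VRep i v))"
        using repl[OF vu(1) vu(2)] nbE_vv[of i u i v V E] uv(4) by simp
      have nov2: "\<not> overlap (P (Bro i v)) (P (VRep i u))"
        using repl[OF vu(1) vu(5)] nbE_vb[of i u i v V E] uv(4) by (simp add: overlap_sym)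
      have nov3: "\<not> overlap (P (Bro i u)) (P (VRep i v))"
        using repl[OF vu(2) vu(4)] nbE_vb[of i v i u V E] uv(4) by (simp add: overlap_sym)
      show False
      proof (rule samebr_ov[OF rT _ _ _ _ _ _ _ _ _ _ ov1 ov2 ov3 ov4 nov1 nov2 nov3 ab bab])
        show "is_path_set T F (P (VRep i u))" "is_path_set T F (P (VRep i v))"
          "is_path_set T F (P (ERep i e))" "is_path_set T F (P (Bro i u))" "is_path_set T F (P (Bro i v))"
          using ps vu by auto
        show "r \<notin> P (VRep i u)" "r \<notin> P (VRep i v)" using i uv by auto
        show "r \<in> P (ERep i e)" "r \<in> P (Bro i u)" "r \<in> P (Bro i v)"
          using rK ERK BroK i6 e uv by auto
      qed
    qed
  qed
qed

lemma hard_int: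
  assumes G: "sgraph V E" and Vne: "V \<noteq> {}"
    and H: "intersection_path_graph k (blocked_V V E) (blocked_E V E)"
  shows "colourable k V E"
proof -
  obtain T :: "nat set" and F P where tr: "is_tree T F" and deg: "max_degree_le k T F"
    and ps: "\<forall>x\<in>blocked_V V E. is_path_set T F (P x)"
    and rep: "\<forall>x\<in>blocked_V V E. \<forall>y\<in>blocked_V V E. x \<noteq> y \<longrightarrow> ({x, y} \<in> blocked_E V E \<longleftrightarrow> P x \<inter> P y \<noteq> {})"
    using H unfolding intersection_path_graph_def by blast
  interpret tree T F using tr by unfold_locales
  have repl: "{x, y} \<in> blocked_E V E \<longleftrightarrow> P x \<inter> P y \<noteq> {}"
    if "x \<in> blocked_V V E" "y \<in> blocked_V V E" "x \<noteq> y" for x y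
    using rep that by blast
  have BroK: "\<And>i v. i < 6 \<Longrightarrow> v \<in> V \<Longrightarrow> Bro i v \<in> Kset V E" by (auto simp: Kset_def)
  have ERK: "\<And>i e. i < 6 \<Longrightarrow> e \<in> E \<Longrightarrow> ERep i e \<in> Kset V E" by (auto simp: Kset_def)
  have BV: "\<And>x. x \<in> Kset V E \<Longrightarrow> x \<in> blocked_V V E" using K_sub by blast
  have psK: "\<And>x. x \<in> Kset V E \<Longrightarrow> is_path_set T F (P x)" using ps BV by blast
  have ovK: "P x \<inter> P y \<noteq> {}" if "x \<in> Kset V E" "y \<in> Kset V E" "x \<noteq> y" for x y
    using repl[OF BV[OF that(1)] BV[OF that(2)] that(3)] bE_K[OF that] by blast
  obtain v0 where v0: "v0 \<in> V" using Vne by blast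
  have "\<exists>r. \<forall>A\<in>P ` Kset V E. r \<in> A"
  proof (rule helly)
    show "finite (P ` Kset V E)" using finite_K[OF G] by simp
    show "P ` Kset V E \<noteq> {}" using BroK[of 0 v0] v0 by auto
    show "\<forall>A\<in>P ` Kset V E. is_path_set T F A" using psK by blast
    show "\<forall>A\<in>P ` Kset V E. \<forall>B\<in>P ` Kset V E. A \<inter> B \<noteq> {}"
    proof (intro ballI)
      fix A B assume "A \<in> P ` Kset V E" "B \<in> P ` Kset V E"
      then obtain x y where xy: "x \<in> Kset V E" "y \<in> Kset V E" "A = P x" "B = P y" by blast
      show "A \<inter> B \<noteq> {}"
      proof (cases "x = y")
        case True then show ?thesis using xy psK ps_T by auto
      next
        case False then show ?thesis using xy ovK by auto
      qed
    qed
  qed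
  then obtain r where rK: "\<And>x. x \<in> Kset V E \<Longrightarrow> r \<in> P x" by blast
  have rT: "r \<in> T" using rK[OF BroK[of 0 v0]] psK[OF BroK[of 0 v0]] ps_T v0 by auto
  have VV: "\<And>i v. i < 6 \<Longrightarrow> v \<in> V \<Longrightarrow> VRep i v \<in> blocked_V V E" by (rule V_in)
  define i :: nat where "i = 0"
  have i6: "i < 6" by (simp add: i_def)
  have rn: "r \<notin> P (VRep i v)" if "v \<in> V" for v
  proof -
    have "P (VRep i v) \<inter> P (Bro 1 v) = {}"
      using repl[OF VV[OF i6 that] BV[OF BroK[OF _ that]]] nbE_vb[of i v 1 v V E]
      by (simp add: i_def)
    then show ?thesis using rK[OF BroK[OF _ that]] by auto
  qed
  show ?thesis
  proof (rule colour_lemma[OF rT deg G, of "\<lambda>v. P (VRep i v)"])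
    show "\<And>v. v \<in> V \<Longrightarrow> is_path_set T F (P (VRep i v)) \<and> r \<notin> P (VRep i v)"
      using ps VV[OF i6] rn by blast
  next
    fix u v a b assume uv: "{u, v} \<in> E" "u \<in> V" "v \<in> V" "u \<noteq> v" and ab: "a \<in> P (VRep i u)" "b \<in> P (VRep i v)"
    show "br r a \<noteq> br r b"
    proof
      assume bab: "br r a = br r b"
      define e where "e = {u, v}"
      have e: "e \<in> E" "u \<in> e" "v \<in> e" using uv by (auto simp: e_def)
      have vu: "VRep i u \<in> blocked_V V E" "VRep i v \<in> blocked_V V E"
        "ERep i e \<in> blocked_V V E" "Bro i u \<in> blocked_V V E" "Bro i v \<in> blocked_V V E"
        using VV[OF i6] BV BroK ERK i6 e uv by auto
      have ov1: "P (ERep i e) \<inter> P (VRep i u) \<noteq> {}"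
        using repl[OF vu(1) vu(3)] bE_ve[OF i6 e(1,2)] by (auto simp: Int_commute)
      have ov2: "P (ERep i e) \<inter> P (VRep i v) \<noteq> {}"
        using repl[OF vu(2) vu(3)] bE_ve[OF i6 e(1,3)] by (auto simp: Int_commute)
      have ov3: "P (Bro i u) \<inter> P (VRep i u) \<noteq> {}"
        using repl[OF vu(1) vu(4)] bE_vb[OF i6 uv(2)] by (auto simp: Int_commute)
      have ov4: "P (Bro i v) \<inter> P (VRep i v) \<noteq> {}"
        using repl[OF vu(2) vu(5)] bE_vb[OF i6 uv(3)] by (auto simp: Int_commute)
      have nov2: "P (Bro i v) \<inter> P (VRep i u) = {}"
        using repl[OF vu(1) vu(5)] nbE_vb[of i u i v V E] uv(4) by (auto simp: Int_commute)
      have nov3: "P (Bro i u) \<inter> P (VRep i v) = {}"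
        using repl[OF vu(2) vu(4)] nbE_vb[of i v i u V E] uv(4) by (auto simp: Int_commute)
      show False
      proof (rule samebr_int[OF rT _ _ _ _ _ _ _ _ _ _ ov1 ov2 ov3 ov4 nov2 nov3 ab bab])
        show "is_path_set T F (P (VRep i u))" "is_path_set T F (P (VRep i v))"
          "is_path_set T F (P (ERep i e))" "is_path_set T F (P (Bro i u))" "is_path_set T F (P (Bro i v))"
          using ps vu by auto
        show "r \<notin> P (VRep i u)" "r \<notin> P (VRep i v)" using rn uv by auto
        show "r \<in> P (ERep i e)" "r \<in> P (Bro i u)" "r \<in> P (Bro i v)"
          using rK ERK BroK i6 e uv by auto
      qed
    qed
  qed
qed

lemma parent_tree:
  fixes rank :: "'n \<Rightarrow> nat"
  assumes fin: "finite T" and r: "r \<in> T"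
    and par: "\<And>x. x \<in> T \<Longrightarrow> x \<noteq> r \<Longrightarrow> par x \<in> T \<and> rank (par x) < rank x"
    and F: "F = {{x, par x} | x. x \<in> T \<and> x \<noteq> r}"
  shows "is_tree T F"
proof -
  have sg: "sgraph T F"
  proof -
    have "card {x, par x} = 2" if "x \<in> T" "x \<noteq> r" for x
      using par[OF that] by (cases "par x = x") auto
    then show ?thesis using fin par unfolding sgraph_def F by auto
  qed
  define R where "R = (\<lambda>x y. x \<in> T \<and> y \<in> T \<and> {x, y} \<in> F)"
  have Rp: "R x (par x) \<and> R (par x) x" if "x \<in> T" "x \<noteq> r" for x
    using par[OF that] that unfolding R_def F by (auto simp: insert_commute)
  have reach: "R\<^sup>*\<^sup>* u r \<and> R\<^sup>*\<^sup>* r u" if "u \<in> T" for u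
    using that
  proof (induction "rank u" arbitrary: u rule: less_induct)
    case less
    show ?case
    proof (cases "u = r")
      case True then show ?thesis by simp
    next
      case False
      have p: "par u \<in> T" "rank (par u) < rank u" using par less.prems False by auto
      then have "R\<^sup>*\<^sup>* (par u) r \<and> R\<^sup>*\<^sup>* r (par u)" using less.hyps by blast
      then show ?thesis using Rp[OF less.prems False]
        by (meson converse_rtranclp_into_rtranclp rtranclp.rtrancl_into_rtrancl)
    qed
  qed
  have conn: "connected_on T F"
    unfolding connected_on_def
  proof (intro conjI ballI)
    show "T \<noteq> {}" using r by auto
    fix u v assume "u \<in> T" "v \<in> T"
    then have "R\<^sup>*\<^sup>* u v" using reach by (meson rtranclp_trans)
    then show "(\<lambda>x y. x \<in> T \<and> y \<in> T \<and> {x, y} \<in> F)\<^sup>*\<^sup>* u v" by (simp add: R_def)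
  qed
  have nc: "\<not> has_cycle T F"
  proof
    assume "has_cycle T F"
    then obtain xs where w: "is_walk T F xs" and d: "distinct xs" and l: "length xs \<ge> 3"
      and cl: "{last xs, hd xs} \<in> F" unfolding has_cycle_def by blast
    define n where "n = length xs"
    define sc where "sc j = (if j = n - 1 then 0 else Suc j)" for j
    have edge: "{xs ! j, xs ! sc j} \<in> F" if "j < n" for j
    proof (cases "j = n - 1")
      case True
      have ne: "xs \<noteq> []" using l by auto
      from True have "{xs ! j, xs ! sc j} = {last xs, hd xs}" using l
        by (simp add: sc_def n_def last_conv_nth[OF ne] hd_conv_nth[OF ne])
      then show ?thesis using cl by simp
    next
      case False
      then show ?thesis using w that unfolding is_walk_def sc_def n_def by auto
    qed
    have xsT: "set xs \<subseteq> T" using w by (simp add: is_walk_def)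
    define M where "M = Max (rank ` set xs)"
    have "M \<in> rank ` set xs" unfolding M_def using l by (intro Max_in) auto
    then obtain i where i: "i < n" "rank (xs ! i) = M" by (auto simp: in_set_conv_nth n_def)
    have mx: "rank (xs ! j) \<le> rank (xs ! i)" if "j < n" for j
    proof -
      have "rank (xs ! j) \<le> M" unfolding M_def using that by (intro Max_ge) (auto simp: n_def)
      then show ?thesis using i by simp
    qed
    have toPar: "xs ! j = par (xs ! i)" if jn: "j < n" and ej: "{xs ! i, xs ! j} \<in> F" for j
    proof -
      obtain x where x: "{xs ! i, xs ! j} = {x, par x}" "x \<in> T" "x \<noteq> r" using ej F by blast
      have "card {xs ! i, xs ! j} = 2" using sg ej by (auto simp: sgraph_def)
      then have "xs ! i \<noteq> xs ! j" by (cases "xs ! i = xs ! j") auto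
      then consider "xs ! i = x \<and> xs ! j = par x" | "xs ! i = par x \<and> xs ! j = x"
        using x(1) by (auto simp: doubleton_eq_iff)
      then show ?thesis
      proof cases
        case 1 then show ?thesis by simp
      next
        case 2
        then have "rank (xs ! i) < rank (xs ! j)" using par[OF x(2,3)] by simp
        then show ?thesis using mx[OF jn] by simp
      qed
    qed
    define p where "p = (if i = 0 then n - 1 else i - 1)"
    have pn: "p < n" and scp: "sc p = i" using i l by (auto simp: p_def sc_def n_def)
    have "{xs ! i, xs ! p} \<in> F" using edge[OF pn] scp by (simp add: insert_commute)
    then have a: "xs ! p = par (xs ! i)" using toPar pn by blast
    have scn: "sc i < n" using i l by (auto simp: sc_def n_def)
    have b: "xs ! sc i = par (xs ! i)" using toPar[OF scn edge[OF i(1)]] .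
    have "sc i \<noteq> p" using i l by (auto simp: sc_def p_def n_def)
    then have "xs ! sc i \<noteq> xs ! p" using d scn pn by (simp add: nth_eq_iff_index_eq n_def)
    then show False using a b by simp
  qed
  show ?thesis using sg conn nc by (simp add: is_tree_def)
qed

lemma parent_deg:
  assumes F: "F = {{x, par x} | x. x \<in> T \<and> x \<noteq> r}"
  shows "{e \<in> F. v \<in> e} \<subseteq> (if v = r then {} else {{v, par v}}) \<union> (\<lambda>x. {x, v}) ` {x \<in> T. x \<noteq> r \<and> par x = v}"
proof
  fix e assume "e \<in> {e \<in> F. v \<in> e}"
  then obtain x where x: "e = {x, par x}" "x \<in> T" "x \<noteq> r" "v \<in> e" unfolding F by blast
  then consider "v = x" | "v = par x" by blast
  then show "e \<in> (if v = r then {} else {{v, par v}}) \<union> (\<lambda>x. {x, v}) ` {x \<in> T. x \<noteq> r \<and> par x = v}"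
  proof cases
    case 1 then show ?thesis using x by simp
  next
    case 2 then have "x \<in> {x \<in> T. x \<noteq> r \<and> par x = v}" using x by simp
    then show ?thesis using x(1) 2 by blast
  qed
qed

context
  fixes f :: "'n \<Rightarrow> 'm" assumes inj: "inj f"
begin

lemma img_edge: "{f a, f b} = f ` {a, b}" by simp

lemma walk_map: assumes "is_walk T F xs" shows "is_walk (f ` T) ((`) f ` F) (map f xs)"
  unfolding is_walk_def
proof (intro conjI allI impI)
  show "map f xs \<noteq> []" "set (map f xs) \<subseteq> f ` T" using assms by (auto simp: is_walk_def)
  fix i assume "Suc i < length (map f xs)"
  then have "{xs ! i, xs ! Suc i} \<in> F" using assms by (auto simp: is_walk_def)
  then have "f ` {xs ! i, xs ! Suc i} \<in> (`) f ` F" by blast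
  then show "{map f xs ! i, map f xs ! Suc i} \<in> (`) f ` F" using \<open>Suc i < length (map f xs)\<close> by simp
qed

lemma inv_edge: assumes "{y1, y2} \<in> (`) f ` F" shows "{inv f y1, inv f y2} \<in> F"
proof -
  obtain e where e: "e \<in> F" "{y1, y2} = f ` e" using assms by blast
  have "inv f ` {y1, y2} = e" using e(2) inj by (simp add: image_image)
  then show ?thesis using e(1) by simp
qed

lemma transfer_tree: assumes "is_tree T F" shows "is_tree (f ` T) ((`) f ` F)"
proof -
  have sg: "sgraph T F" and cn: "connected_on T F" and nc: "\<not> has_cycle T F"
    using assms by (auto simp: is_tree_def)
  have sg': "sgraph (f ` T) ((`) f ` F)"
    unfolding sgraph_def
  proof (intro conjI ballI)
    show "finite (f ` T)" using sg by (simp add: sgraph_def)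
    fix e' assume "e' \<in> (`) f ` F"
    then obtain e where e: "e \<in> F" "e' = f ` e" by blast
    have "e \<subseteq> T" "card e = 2" using sg e(1) by (auto simp: sgraph_def)
    then show "e' \<subseteq> f ` T" "card e' = 2"
      using e(2) card_image[OF inj_on_subset[OF inj subset_UNIV, of e]] by auto
  qed
  have R: "(\<lambda>x y. x \<in> f ` T \<and> y \<in> f ` T \<and> {x, y} \<in> (`) f ` F)\<^sup>*\<^sup>* (f u) (f v)"
    if "(\<lambda>x y. x \<in> T \<and> y \<in> T \<and> {x, y} \<in> F)\<^sup>*\<^sup>* u v" for u v
    using that
  proof (induction rule: rtranclp_induct)
    case base then show ?case by simp
  next
    case (step y z)
    then have "y \<in> T" "z \<in> T" "{y, z} \<in> F" by auto
    then have "f y \<in> f ` T \<and> f z \<in> f ` T \<and> {f y, f z} \<in> (`) f ` F"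
      using img_edge[of y z] by (metis image_eqI)
    then show ?case using step(3) by (simp add: rtranclp.rtrancl_into_rtrancl)
  qed
  have cn': "connected_on (f ` T) ((`) f ` F)"
    unfolding connected_on_def
  proof (intro conjI ballI)
    show "f ` T \<noteq> {}" using cn by (simp add: connected_on_def)
    fix u' v' assume "u' \<in> f ` T" "v' \<in> f ` T"
    then obtain u v where uv: "u \<in> T" "v \<in> T" "u' = f u" "v' = f v" by blast
    have "(\<lambda>x y. x \<in> T \<and> y \<in> T \<and> {x, y} \<in> F)\<^sup>*\<^sup>* u v"
      using cn uv unfolding connected_on_def by blast
    from R[OF this] show "(\<lambda>x y. x \<in> f ` T \<and> y \<in> f ` T \<and> {x, y} \<in> (`) f ` F)\<^sup>*\<^sup>* u' v'"
      using uv by simp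
  qed
  have nc': "\<not> has_cycle (f ` T) ((`) f ` F)"
  proof
    assume "has_cycle (f ` T) ((`) f ` F)"
    then obtain ys where w: "is_walk (f ` T) ((`) f ` F) ys" and d: "distinct ys"
      and l: "length ys \<ge> 3" and cl: "{last ys, hd ys} \<in> (`) f ` F"
      unfolding has_cycle_def by blast
    have ysT: "set ys \<subseteq> f ` T" using w by (simp add: is_walk_def)
    have "is_walk T F (map (inv f) ys)"
      unfolding is_walk_def
    proof (intro conjI allI impI)
      show "map (inv f) ys \<noteq> []" using l by auto
      show "set (map (inv f) ys) \<subseteq> T"
      proof
        fix x assume "x \<in> set (map (inv f) ys)"
        then obtain y where "y \<in> set ys" "x = inv f y" by auto
        then obtain t where "t \<in> T" "y = f t" using ysT by auto
        then show "x \<in> T" using \<open>x = inv f y\<close> inv_f_f[OF inj] by simp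
      qed
      fix i assume i: "Suc i < length (map (inv f) ys)"
      then have "{ys ! i, ys ! Suc i} \<in> (`) f ` F" using w unfolding is_walk_def by simp
      then show "{map (inv f) ys ! i, map (inv f) ys ! Suc i} \<in> F"
        using inv_edge i by simp
    qed
    moreover have "distinct (map (inv f) ys)"
    proof -
      have "set ys \<subseteq> f ` UNIV" using ysT by auto
      then have "inj_on (inv f) (set ys)" by (rule inj_on_inv_into)
      then show ?thesis using d by (simp add: distinct_map)
    qed
    moreover have "length (map (inv f) ys) \<ge> 3" using l by simp
    moreover have "{last (map (inv f) ys), hd (map (inv f) ys)} \<in> F"
    proof -
      have "ys \<noteq> []" using l by auto
      then show ?thesis using inv_edge[OF cl] by (simp add: last_map hd_map)
    qed
    ultimately have "has_cycle T F" unfolding has_cycle_def by blast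
    then show False using nc by simp
  qed
  show ?thesis using sg' cn' nc' by (simp add: is_tree_def)
qed

lemma transfer_deg: assumes "max_degree_le k T F" "finite F" shows "max_degree_le k (f ` T) ((`) f ` F)"
  unfolding max_degree_le_def
proof
  fix v' assume "v' \<in> f ` T"
  then obtain v where v: "v \<in> T" "v' = f v" by blast
  have "{e \<in> (`) f ` F. v' \<in> e} \<subseteq> (`) f ` {e \<in> F. v \<in> e}"
  proof
    fix e' assume "e' \<in> {e \<in> (`) f ` F. v' \<in> e}"
    then obtain e where e: "e \<in> F" "e' = f ` e" "f v \<in> f ` e" using v by auto
    then have "v \<in> e" using inj_image_mem_iff[OF inj, of v e] by simp
    then show "e' \<in> (`) f ` {e \<in> F. v \<in> e}" using e by blast
  qed
  then have "card {e \<in> (`) f ` F. v' \<in> e} \<le> card ((`) f ` {e \<in> F. v \<in> e})"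
    using assms(2) by (intro card_mono) auto
  also have "... \<le> card {e \<in> F. v \<in> e}" by (rule card_image_le) (use assms(2) in simp)
  also have "... \<le> k" using assms v by (simp add: max_degree_le_def)
  finally show "card {e \<in> (`) f ` F. v' \<in> e} \<le> k" .
qed

lemma transfer_path: "is_path_set T F P \<Longrightarrow> is_path_set (f ` T) ((`) f ` F) (f ` P)"
proof -
  assume "is_path_set T F P"
  then obtain xs where "is_walk T F xs" "distinct xs" "set xs = P" unfolding is_path_set_def by blast
  then have "is_walk (f ` T) ((`) f ` F) (map f xs) \<and> distinct (map f xs) \<and> set (map f xs) = f ` P"
    using walk_map distinct_map[of f xs] inj_on_subset[OF inj subset_UNIV] by simp
  then show ?thesis unfolding is_path_set_def by blast
qed

lemma transfer_overlap: "overlap (f ` A) (f ` B) \<longleftrightarrow> overlap A B"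
  by (simp only: overlap_def image_Int[OF inj, symmetric] image_set_diff[OF inj, symmetric] image_is_empty)

lemma transfer_int: "f ` A \<inter> f ` B \<noteq> {} \<longleftrightarrow> A \<inter> B \<noteq> {}"
  by (simp only: image_Int[OF inj, symmetric] image_is_empty)

end

datatype nd = Rt | Sp nat nat | Lf nat nat | Mf nat nat

instance nd :: countable by countable_datatype

fun par :: "nd \<Rightarrow> nd" where
  "par Rt = Rt"
| "par (Sp b 0) = Rt"
| "par (Sp b (Suc j)) = Sp b j"
| "par (Lf b j) = Sp b j"
| "par (Mf b j) = Lf b j"

fun rk :: "nd \<Rightarrow> nat" where
  "rk Rt = 0"
| "rk (Sp b j) = Suc j"
| "rk (Lf b j) = j + 2"
| "rk (Mf b j) = j + 3"

definition ndT :: "nat \<Rightarrow> nat \<Rightarrow> nd set" where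
  "ndT k N = insert Rt ((\<lambda>(b, j). Sp b j) ` ({..<k} \<times> {..<N}) \<union> (\<lambda>(b, j). Lf b j) ` ({..<k} \<times> {..<N})
     \<union> (\<lambda>(b, j). Mf b j) ` ({..<k} \<times> {..<N}))"

definition ndF :: "nat \<Rightarrow> nat \<Rightarrow> nd set set" where
  "ndF k N = {{x, par x} | x. x \<in> ndT k N \<and> x \<noteq> Rt}"

lemma ndT_simps [simp]:
  "Rt \<in> ndT k N"
  "Sp b j \<in> ndT k N \<longleftrightarrow> b < k \<and> j < N"
  "Lf b j \<in> ndT k N \<longleftrightarrow> b < k \<and> j < N"
  "Mf b j \<in> ndT k N \<longleftrightarrow> b < k \<and> j < N"
  by (auto simp: ndT_def)

lemma par_T: assumes "x \<in> ndT k N" "x \<noteq> Rt" shows "par x \<in> ndT k N \<and> rk (par x) < rk x"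
proof (cases x)
  case (Sp b j) then show ?thesis by (cases j) (use assms in auto)
qed (use assms in auto)

lemma nd_tree: "is_tree (ndT k N) (ndF k N)"
proof (rule parent_tree[where rank = rk and r = Rt and par = par])
  show "finite (ndT k N)" by (simp add: ndT_def)
qed (auto simp: par_T ndF_def)

lemma par_eq_Rt: "par x = Rt \<Longrightarrow> x = Rt \<or> (\<exists>b. x = Sp b 0)"
  by (cases x rule: par.cases) auto

lemma par_eq_Sp: "par x = Sp b j \<Longrightarrow> x = Sp b (Suc j) \<or> x = Lf b j"
  by (cases x rule: par.cases) auto

lemma par_eq_Lf: "par x = Lf b j \<Longrightarrow> x = Mf b j"
  by (cases x rule: par.cases) auto

lemma par_eq_Mf: "par x \<noteq> Mf b j"
  by (cases x rule: par.cases) auto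

lemma nd_deg:
  assumes k: "k \<ge> 3"
  shows "max_degree_le k (ndT k N) (ndF k N)"
  unfolding max_degree_le_def
proof
  fix v assume vT: "v \<in> ndT k N"
  define ch where "ch = {x \<in> ndT k N. x \<noteq> Rt \<and> par x = v}"
  have sub: "{e \<in> ndF k N. v \<in> e} \<subseteq> (if v = Rt then {} else {{v, par v}}) \<union> (\<lambda>x. {x, v}) ` ch"
    unfolding ch_def by (rule parent_deg) (simp add: ndF_def)
  have bound: "card {e \<in> ndF k N. v \<in> e} \<le> (if v = Rt then 0 else 1) + card ch"
  proof -
    have finch: "finite ch" unfolding ch_def by (rule finite_subset[of _ "ndT k N"]) (auto simp: ndT_def)
    have "card {e \<in> ndF k N. v \<in> e} \<le> card ((if v = Rt then {} else {{v, par v}}) \<union> (\<lambda>x. {x, v}) ` ch)"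
      using sub finch by (intro card_mono) auto
    also have "... \<le> card (if v = Rt then {} else {{v, par v}}) + card ((\<lambda>x. {x, v}) ` ch)"
      by (rule card_Un_le)
    also have "... \<le> (if v = Rt then 0 else 1) + card ch"
      using card_image_le[OF finch, of "\<lambda>x. {x, v}"] by auto
    finally show ?thesis .
  qed
  have "(if v = Rt then 0 else 1) + card ch \<le> k"
  proof (cases v)
    case Rt
    have "ch \<subseteq> (\<lambda>b. Sp b 0) ` {..<k}"
      unfolding ch_def using par_eq_Rt Rt by fastforce
    then have "card ch \<le> card ((\<lambda>b. Sp b 0) ` {..<k})" by (intro card_mono) auto
    also have "... \<le> k" using card_image_le[of "{..<k}" "\<lambda>b. Sp b 0"] by simp
    finally show ?thesis using Rt by simp
  next
    case (Sp b j)
    have "ch \<subseteq> {Sp b (Suc j), Lf b j}" unfolding ch_def using par_eq_Sp Sp by blast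
    then have "card ch \<le> card {Sp b (Suc j), Lf b j}" by (intro card_mono) auto
    also have "... \<le> 2" by (simp add: card_insert_le_m1)
    finally show ?thesis using Sp k by simp
  next
    case (Lf b j)
    have "ch \<subseteq> {Mf b j}" unfolding ch_def using par_eq_Lf Lf by blast
    then have "card ch \<le> 1" using card_mono[of "{Mf b j}" ch] by simp
    then show ?thesis using Lf k by simp
  next
    case (Mf b j)
    have "ch = {}" unfolding ch_def using par_eq_Mf Mf by blast
    then show ?thesis using Mf k by simp
  qed
  then show "card {e \<in> ndF k N. v \<in> e} \<le> k" using bound by linarith
qed

locale cons =
  fixes V :: "'a set" and E :: "'a set set" and k :: nat and c :: "'a \<Rightarrow> nat" and idx :: "'a \<Rightarrow> nat"
  assumes G: "sgraph V E" and k3: "k \<ge> 3" and cV: "\<And>v. v \<in> V \<Longrightarrow> c v < k"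
    and cE: "\<And>e u v. e \<in> E \<Longrightarrow> e = {u, v} \<Longrightarrow> c u \<noteq> c v"
    and idx: "bij_betw idx V {0..<card V}"
begin

definition "n = card V"
definition "NN = 6 * n + 1"
definition "pos i v = i * n + idx v"
definition "dd v = (c v + 1) mod k"
definition "lst b j = Rt # map (Sp b) [0..<j]"
definition "arm b j = lst b (Suc j) @ [Lf b j]"
definition "TT = ndT k NN"
definition "FF = ndF k NN"

lemma idx_lt: "v \<in> V \<Longrightarrow> idx v < n"
  using idx by (auto simp: bij_betw_def n_def)

lemma idx_inj: "v \<in> V \<Longrightarrow> w \<in> V \<Longrightarrow> idx v = idx w \<Longrightarrow> v = w"
  using idx by (auto simp: bij_betw_def inj_on_def)

lemma pos_lt: assumes "i < 6" "v \<in> V" shows "pos i v < 6 * n"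
proof -
  have "i * n \<le> 5 * n" using assms(1) by (intro mult_le_mono1) simp
  then show ?thesis using idx_lt[OF assms(2)] unfolding pos_def by linarith
qed

lemma pos_NN: "i < 6 \<Longrightarrow> v \<in> V \<Longrightarrow> pos i v < NN"
  using pos_lt[of i v] unfolding NN_def by linarith

lemma pos_eq: assumes "v \<in> V" "w \<in> V" shows "pos i v = pos j w \<longleftrightarrow> i = j \<and> v = w"
proof
  assume h: "pos i v = pos j w"
  have a: "idx v < n" "idx w < n" using idx_lt assms by auto
  have "i = j"
  proof (rule ccontr)
    assume "i \<noteq> j"
    then consider "Suc i \<le> j" | "Suc j \<le> i" by linarith
    then show False
    proof cases
      case 1
      then have "Suc i * n \<le> j * n" by (rule mult_le_mono1)
      then show False using h a by (simp add: pos_def)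
    next
      case 2
      then have "Suc j * n \<le> i * n" by (rule mult_le_mono1)
      then show False using h a by (simp add: pos_def)
    qed
  qed
  then have "idx v = idx w" using h by (simp add: pos_def)
  then show "i = j \<and> v = w" using idx_inj assms \<open>i = j\<close> by blast
qed simp

lemma dd_lt: "v \<in> V \<Longrightarrow> dd v < k" using k3 by (simp add: dd_def)

lemma dd_ne: assumes "v \<in> V" shows "dd v \<noteq> c v"
proof -
  have "c v < k" using cV assms .
  then show ?thesis using k3 unfolding dd_def
    by (cases "Suc (c v) < k") (auto simp: mod_if)
qed

lemma set_lst: "set (lst b j) = insert Rt (Sp b ` {..<j})"
  by (auto simp: lst_def)

lemma set_arm: "set (arm b j) = insert Rt (insert (Lf b j) (Sp b ` {..j}))"
  by (auto simp: arm_def lst_def)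

lemma edge_in: "x \<in> TT \<Longrightarrow> x \<noteq> Rt \<Longrightarrow> adj FF x (par x)"
  by (auto simp: adj_def FF_def ndF_def TT_def)

lemma adj_R0: "b < k \<Longrightarrow> adj FF Rt (Sp b 0)"
  using edge_in[of "Sp b 0"] by (simp add: TT_def NN_def adj_sym)

lemma adj_SS: "b < k \<Longrightarrow> Suc t < NN \<Longrightarrow> adj FF (Sp b t) (Sp b (Suc t))"
  using edge_in[of "Sp b (Suc t)"] by (simp add: TT_def adj_sym)

lemma adj_SL: "b < k \<Longrightarrow> t < NN \<Longrightarrow> adj FF (Sp b t) (Lf b t)"
  using edge_in[of "Lf b t"] by (simp add: TT_def adj_sym)

lemma adj_LM: "b < k \<Longrightarrow> t < NN \<Longrightarrow> adj FF (Lf b t) (Mf b t)"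
  using edge_in[of "Mf b t"] by (simp add: TT_def adj_sym)

lemma lst_Suc: "lst b (Suc j) = lst b j @ [Sp b j]"
  by (simp add: lst_def)

lemma last_lst: "last (lst b (Suc j)) = Sp b j"
  by (simp add: lst_Suc)

lemma succ_lst: "b < k \<Longrightarrow> j \<le> NN \<Longrightarrow> successively (adj FF) (lst b j)"
proof (induction j)
  case 0 then show ?case by (simp add: lst_def)
next
  case (Suc j)
  have IH: "successively (adj FF) (lst b j)" using Suc by simp
  have "adj FF (last (lst b j)) (Sp b j)"
  proof (cases j)
    case 0 then show ?thesis using adj_R0 Suc.prems by (simp add: lst_def)
  next
    case (Suc j')
    then show ?thesis using adj_SS[of b j'] Suc.prems \<open>j = Suc j'\<close> by (simp add: last_lst)
  qed
  then show ?case using IH unfolding lst_Suc by (simp add: successively_append_iff)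
qed

lemma lst_T: "b < k \<Longrightarrow> j \<le> NN \<Longrightarrow> set (lst b j) \<subseteq> TT"
  by (auto simp: set_lst TT_def)

lemma distinct_lst: "distinct (lst b j)"
  by (auto simp: lst_def distinct_map inj_on_def)

lemma dw_arm: assumes "b < k" "j < NN" shows "dw TT FF Rt (Lf b j) (arm b j)"
proof -
  have "successively (adj FF) (lst b (Suc j) @ [Lf b j])"
    using succ_lst[of b "Suc j"] assms adj_SL[OF assms] by (simp add: successively_append_iff last_lst)
  moreover have "distinct (arm b j)" using distinct_lst[of b "Suc j"] by (auto simp: arm_def set_lst)
  moreover have "set (arm b j) \<subseteq> TT" using assms by (auto simp: set_arm TT_def)
  ultimately show ?thesis by (auto simp: dw_def arm_def lst_def)
qed

lemma dw_spine: assumes "b < k" shows "dw TT FF Rt (Sp b (NN - 1)) (lst b NN)"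
proof -
  have NN: "NN = Suc (6 * n)" by (simp add: NN_def)
  show ?thesis using succ_lst[of b NN] assms distinct_lst[of b NN] lst_T[of b NN] last_lst[of b "6 * n"]
    unfolding NN by (auto simp: dw_def lst_def)
qed

lemma tree_TT: "is_tree TT FF" unfolding TT_def FF_def by (rule nd_tree)

end

lemma dw_ps': "dw T F x y xs \<Longrightarrow> is_path_set T F (set xs)"
  by (auto simp: is_path_set_def is_walk_succ dw_def)

context cons begin

definition PS :: "'a blk \<Rightarrow> nd set" where
  "PS x = (case x of VRep i v \<Rightarrow> {Lf (c v) (pos i v), Mf (c v) (pos i v)}
     | Bro i v \<Rightarrow> set (arm (c v) (pos i v)) \<union> set (lst (dd v) NN)
     | ERep i e \<Rightarrow> insert Rt (\<Union>u\<in>e. set (arm (c u) (pos i u))))"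

lemma E_V: "e \<in> E \<Longrightarrow> u \<in> e \<Longrightarrow> u \<in> V"
  using G by (auto simp: sgraph_def)

lemma E_two: assumes "e \<in> E" obtains u w where "e = {u, w}" "u \<noteq> w" "u \<in> V" "w \<in> V"
proof -
  have "card e = 2" using G assms by (auto simp: sgraph_def)
  then obtain u w where "e = {u, w}" "u \<noteq> w" by (auto simp: card_2_iff)
  then show ?thesis using that E_V[OF assms] by blast
qed

lemma PS_V: "PS (VRep i v) = {Lf (c v) (pos i v), Mf (c v) (pos i v)}"
  by (simp add: PS_def)

lemma PS_B: "PS (Bro i v) = insert Rt (insert (Lf (c v) (pos i v)) (Sp (c v) ` {..pos i v} \<union> Sp (dd v) ` {..<NN}))"
  by (auto simp: PS_def set_arm set_lst)

lemma PS_E: "PS (ERep i e) = insert Rt (\<Union>u\<in>e. insert (Lf (c u) (pos i u)) (Sp (c u) ` {..pos i u}))"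
  by (auto simp: PS_def set_arm)

lemma ps_V: assumes "i < 6" "v \<in> V" shows "is_path_set TT FF (PS (VRep i v))"
proof -
  have "adj FF (Lf (c v) (pos i v)) (Mf (c v) (pos i v))"
    using adj_LM cV pos_NN assms by blast
  then have "is_walk TT FF [Lf (c v) (pos i v), Mf (c v) (pos i v)]"
    using cV pos_NN assms by (auto simp: is_walk_def adj_def TT_def nth_Cons split: nat.splits)
  then show ?thesis unfolding is_path_set_def PS_V
    by (intro exI[of _ "[Lf (c v) (pos i v), Mf (c v) (pos i v)]"]) auto
qed

lemma ps_B: assumes "i < 6" "v \<in> V" shows "is_path_set TT FF (PS (Bro i v))"
proof -
  have a: "dw TT FF Rt (Lf (c v) (pos i v)) (arm (c v) (pos i v))"
    using dw_arm cV pos_NN assms by blast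
  have b: "dw TT FF Rt (Sp (dd v) (NN - 1)) (lst (dd v) NN)"
    using dw_spine dd_lt assms by blast
  have "set (rev (arm (c v) (pos i v))) \<inter> set (lst (dd v) NN) = {Rt}"
    using dd_ne[OF assms(2)] by (auto simp: set_arm set_lst)
  then have "dw TT FF (Lf (c v) (pos i v)) (Sp (dd v) (NN - 1)) (rev (arm (c v) (pos i v)) @ tl (lst (dd v) NN))"
    using dw_concat[OF dw_rev[OF a] b] by simp
  moreover have "set (rev (arm (c v) (pos i v)) @ tl (lst (dd v) NN)) = PS (Bro i v)"
    by (auto simp: PS_def set_arm lst_def)
  ultimately show ?thesis using dw_ps' by metis
qed

lemma ps_E: assumes "i < 6" "e \<in> E" shows "is_path_set TT FF (PS (ERep i e))"
proof -
  obtain u w where uw: "e = {u, w}" "u \<noteq> w" "u \<in> V" "w \<in> V" using E_two[OF assms(2)] by blast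
  have cuw: "c u \<noteq> c w" using cE[OF assms(2) uw(1)] .
  have a: "dw TT FF Rt (Lf (c u) (pos i u)) (arm (c u) (pos i u))"
    using dw_arm cV pos_NN assms uw by blast
  have b: "dw TT FF Rt (Lf (c w) (pos i w)) (arm (c w) (pos i w))"
    using dw_arm cV pos_NN assms uw by blast
  have "set (rev (arm (c u) (pos i u))) \<inter> set (arm (c w) (pos i w)) = {Rt}"
    using cuw by (auto simp: set_arm)
  then have "dw TT FF (Lf (c u) (pos i u)) (Lf (c w) (pos i w)) (rev (arm (c u) (pos i u)) @ tl (arm (c w) (pos i w)))"
    using dw_concat[OF dw_rev[OF a] b] by simp
  moreover have "set (rev (arm (c u) (pos i u)) @ tl (arm (c w) (pos i w))) = PS (ERep i e)"
    unfolding PS_E uw by (auto simp: set_arm arm_def lst_def)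
  ultimately show ?thesis using dw_ps' by metis
qed

end

context cons begin

lemma Lf_B: "Lf b t \<in> PS (Bro i v) \<longleftrightarrow> b = c v \<and> t = pos i v"
  by (auto simp: PS_B)

lemma Mf_B: "Mf b t \<notin> PS (Bro i v)"
  by (auto simp: PS_B)

lemma Lf_E: "Lf b t \<in> PS (ERep i e) \<longleftrightarrow> (\<exists>u\<in>e. b = c u \<and> t = pos i u)"
  by (auto simp: PS_E)

lemma Mf_E: "Mf b t \<notin> PS (ERep i e)"
  by (auto simp: PS_E)

lemma Rt_K: "Rt \<in> PS (Bro i v)" "Rt \<in> PS (ERep i e)"
  by (auto simp: PS_B PS_E)

lemma L_vv: assumes "v \<in> V" "w \<in> V" "(i, v) \<noteq> (j, w)"
  shows "PS (VRep i v) \<inter> PS (VRep j w) = {}"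
  using assms pos_eq[OF assms(1,2), of i j] by (auto simp: PS_V)

lemma L_vb_eq: assumes "v \<in> V"
  shows "PS (VRep i v) \<inter> PS (Bro i v) \<noteq> {} \<and> overlap (PS (VRep i v)) (PS (Bro i v))"
proof -
  have "Lf (c v) (pos i v) \<in> PS (VRep i v) \<inter> PS (Bro i v)" by (simp add: PS_V Lf_B)
  moreover have "Mf (c v) (pos i v) \<in> PS (VRep i v) - PS (Bro i v)" by (simp add: PS_V Mf_B)
  moreover have "Rt \<in> PS (Bro i v) - PS (VRep i v)" by (simp add: PS_V Rt_K)
  ultimately show ?thesis unfolding overlap_def by blast
qed

lemma L_vb_ne: assumes "v \<in> V" "w \<in> V" "(i, v) \<noteq> (j, w)"
  shows "PS (VRep i v) \<inter> PS (Bro j w) = {}"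
  using assms pos_eq[OF assms(1,2), of i j] by (auto simp: PS_V Lf_B Mf_B)

lemma L_ve_in: assumes "e \<in> E" "v \<in> e"
  shows "PS (VRep i v) \<inter> PS (ERep i e) \<noteq> {} \<and> overlap (PS (VRep i v)) (PS (ERep i e))"
proof -
  have "Lf (c v) (pos i v) \<in> PS (VRep i v) \<inter> PS (ERep i e)" using assms by (auto simp: PS_V Lf_E)
  moreover have "Mf (c v) (pos i v) \<in> PS (VRep i v) - PS (ERep i e)" by (simp add: PS_V Mf_E)
  moreover have "Rt \<in> PS (ERep i e) - PS (VRep i v)" by (simp add: PS_V Rt_K)
  ultimately show ?thesis unfolding overlap_def by blast
qed

lemma L_ve_out: assumes "v \<in> V" "e \<in> E" "\<not> (i = j \<and> v \<in> e)"
  shows "PS (VRep i v) \<inter> PS (ERep j e) = {}"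
proof -
  have "Lf (c v) (pos i v) \<notin> PS (ERep j e)"
  proof
    assume "Lf (c v) (pos i v) \<in> PS (ERep j e)"
    then obtain u where "u \<in> e" "pos i v = pos j u" by (auto simp: Lf_E)
    then show False using pos_eq[OF assms(1) E_V[OF assms(2)], of u i j] assms(3) by auto
  qed
  then show ?thesis by (auto simp: PS_V Mf_E)
qed

lemma L_bb: assumes "v \<in> V" "w \<in> V" "(i, v) \<noteq> (j, w)"
  shows "Lf (c v) (pos i v) \<in> PS (Bro i v) - PS (Bro j w)"
  using assms pos_eq[OF assms(1,2), of i j] by (auto simp: Lf_B)

lemma L_be: assumes "i < 6" "j < 6" "v \<in> V" "e \<in> E"
  shows "Sp (dd v) (NN - 1) \<in> PS (Bro i v) - PS (ERep j e)"
proof -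
  have "Sp (dd v) (NN - 1) \<notin> PS (ERep j e)"
  proof
    assume "Sp (dd v) (NN - 1) \<in> PS (ERep j e)"
    then obtain u where "u \<in> e" "NN - 1 \<le> pos j u" by (auto simp: PS_E)
    then show False using pos_lt[OF assms(2) E_V[OF assms(4)], of u] by (simp add: NN_def)
  qed
  moreover have "Sp (dd v) (NN - 1) \<in> PS (Bro i v)" by (auto simp: PS_B NN_def)
  ultimately show ?thesis by blast
qed

lemma L_eb: assumes "i < 6" "j < 6" "v \<in> V" "e \<in> E"
  shows "PS (ERep j e) - PS (Bro i v) \<noteq> {}"
proof -
  obtain u w where uw: "e = {u, w}" "u \<noteq> w" "u \<in> V" "w \<in> V" using E_two[OF assms(4)] by blast
  have "pos j u \<noteq> pos j w" using pos_eq[OF uw(3,4)] uw(2) by simp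
  then have "Lf (c u) (pos j u) \<notin> PS (Bro i v) \<or> Lf (c w) (pos j w) \<notin> PS (Bro i v)"
    by (auto simp: Lf_B)
  moreover have "Lf (c u) (pos j u) \<in> PS (ERep j e)" "Lf (c w) (pos j w) \<in> PS (ERep j e)"
    using uw by (auto simp: Lf_E)
  ultimately show ?thesis by blast
qed

lemma L_ee: assumes "e \<in> E" "e' \<in> E" "(i, e) \<noteq> (j, e')"
  shows "PS (ERep i e) - PS (ERep j e') \<noteq> {}"
proof
  assume h: "PS (ERep i e) - PS (ERep j e') = {}"
  have sub: "u \<in> e'" "i = j" if "u \<in> e" for u
  proof -
    have "Lf (c u) (pos i u) \<in> PS (ERep i e)" using that by (auto simp: Lf_E)
    then have "Lf (c u) (pos i u) \<in> PS (ERep j e')" using h by blast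
    then obtain u' where "u' \<in> e'" "pos i u = pos j u'" by (auto simp: Lf_E)
    then have "i = j \<and> u = u'" using pos_eq E_V assms that by blast
    then show "u \<in> e'" "i = j" using \<open>u' \<in> e'\<close> by auto
  qed
  obtain u w where uw: "e = {u, w}" "u \<noteq> w" "u \<in> V" "w \<in> V" using E_two[OF assms(1)] by blast
  have ij: "i = j" using sub uw by blast
  have "e \<subseteq> e'" using sub by blast
  moreover have "card e = 2" "card e' = 2" using G assms by (auto simp: sgraph_def)
  moreover have "finite e'" using \<open>card e' = 2\<close> card.infinite by fastforce
  ultimately have "e = e'" by (metis card_subset_eq)
  then show False using assms(3) ij by simp
qed

lemma L_KK: assumes "x \<in> Kset V E" "y \<in> Kset V E" "x \<noteq> y"
  shows "PS x \<inter> PS y \<noteq> {} \<and> overlap (PS x) (PS y)"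
proof -
  have Rt: "Rt \<in> PS x" "Rt \<in> PS y" using assms(1,2) Rt_K by (auto simp: Kset_def)
  have d1: "PS x - PS y \<noteq> {}" and d2: "PS y - PS x \<noteq> {}"
  proof -
    have gen: "PS a - PS b \<noteq> {}" if aK: "a \<in> Kset V E" and bK: "b \<in> Kset V E" and ab: "a \<noteq> b" for a b
    proof -
      consider (BB) i v j w where "a = Bro i v" "b = Bro j w" "i < 6" "j < 6" "v \<in> V" "w \<in> V"
        | (BE) i v j e where "a = Bro i v" "b = ERep j e" "i < 6" "j < 6" "v \<in> V" "e \<in> E"
        | (EB) i e j v where "a = ERep i e" "b = Bro j v" "i < 6" "j < 6" "e \<in> E" "v \<in> V"
        | (EE) i e j e' where "a = ERep i e" "b = ERep j e'" "i < 6" "j < 6" "e \<in> E" "e' \<in> E"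
        using aK bK unfolding Kset_def by blast
      then show ?thesis
      proof cases
        case BB then show ?thesis using L_bb[of v w i j] ab by blast
      next
        case BE then show ?thesis using L_be[of i j v e] by blast
      next
        case EB then show ?thesis using L_eb[of j i v e] by blast
      next
        case EE then show ?thesis using L_ee[of e e' i j] ab by blast
      qed
    qed
    show "PS x - PS y \<noteq> {}" using gen assms by blast
    show "PS y - PS x \<noteq> {}" using gen assms by blast
  qed
  show ?thesis using Rt d1 d2 unfolding overlap_def by blast
qed

end

lemma ov_sym: "overlap a b = overlap b a" by (auto simp: overlap_def)

lemma mem_ve: "{VRep i v, ERep j e} \<in> blocked_E V E \<Longrightarrow> i = j \<and> v \<in> e"
  unfolding blocked_E_def Un_iff mem_Collect_eq
  by (auto simp: doubleton_eq_iff)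

lemma BV_cases: "x \<in> blocked_V V E \<Longrightarrow> (\<exists>i v. x = VRep i v \<and> i < 6 \<and> v \<in> V) \<or> x \<in> Kset V E"
  unfolding blocked_V_def Kset_def by blast

context cons begin

lemma relV:
  assumes v: "v \<in> V" "i < 6" and y: "y \<in> blocked_V V E" "y \<noteq> VRep i v"
  shows "({VRep i v, y} \<in> blocked_E V E \<longrightarrow> PS (VRep i v) \<inter> PS y \<noteq> {} \<and> overlap (PS (VRep i v)) (PS y))
       \<and> ({VRep i v, y} \<notin> blocked_E V E \<longrightarrow> PS (VRep i v) \<inter> PS y = {})"
proof -
  have "(\<exists>j w. y = VRep j w \<and> j < 6 \<and> w \<in> V) \<or> (\<exists>j w. y = Bro j w \<and> j < 6 \<and> w \<in> V)
     \<or> (\<exists>j e. y = ERep j e \<and> j < 6 \<and> e \<in> E)"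
    using y(1) unfolding blocked_V_def by blast
  then show ?thesis
  proof (elim disjE exE conjE)
    fix j w assume h: "y = VRep j w" "j < 6" "w \<in> V"
    then have "(i, v) \<noteq> (j, w)" using y(2) by auto
    then show ?thesis using L_vv[OF v(1) h(3)] nbE_vv h(1) by simp
  next
    fix j w assume h: "y = Bro j w" "j < 6" "w \<in> V"
    show ?thesis
    proof (cases "(i, v) = (j, w)")
      case True
      then show ?thesis using L_vb_eq[OF v(1), of i] bE_vb[OF v(2) v(1), of E] h(1) by simp
    next
      case False
      then show ?thesis using L_vb_ne[OF v(1) h(3) False] nbE_vb[OF False] h(1) by simp
    qed
  next
    fix j e assume h: "y = ERep j e" "j < 6" "e \<in> E"
    show ?thesis
    proof (cases "i = j \<and> v \<in> e")
      case True
      then show ?thesis using L_ve_in[OF h(3), of v i] bE_ve[OF v(2) h(3), of v V] h(1) by simp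
    next
      case False
      then show ?thesis using L_ve_out[OF v(1) h(3) False] mem_ve[of i v j e V E] h(1) by auto
    qed
  qed
qed

lemma rel:
  assumes x: "x \<in> blocked_V V E" and y: "y \<in> blocked_V V E" and xy: "x \<noteq> y"
  shows "({x, y} \<in> blocked_E V E \<longrightarrow> PS x \<inter> PS y \<noteq> {} \<and> overlap (PS x) (PS y))
       \<and> ({x, y} \<notin> blocked_E V E \<longrightarrow> PS x \<inter> PS y = {})"
proof -
  consider (V1) i v where "x = VRep i v" "i < 6" "v \<in> V" | (K1) "x \<in> Kset V E" using BV_cases[OF x] by blast
  then show ?thesis
  proof cases
    case V1 then show ?thesis using relV[of v i y] y xy by simp
  next
    case K1
    consider (V2) j w where "y = VRep j w" "j < 6" "w \<in> V" | (K2) "y \<in> Kset V E" using BV_cases[OF y] by blast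
    then show ?thesis
    proof cases
      case V2
      then have "({y, x} \<in> blocked_E V E \<longrightarrow> PS y \<inter> PS x \<noteq> {} \<and> overlap (PS y) (PS x))
       \<and> ({y, x} \<notin> blocked_E V E \<longrightarrow> PS y \<inter> PS x = {})" using relV[of w j x] x xy by simp
      then show ?thesis by (simp add: insert_commute Int_commute ov_sym)
    next
      case K2 then show ?thesis using bE_K[OF K1 K2 xy] L_KK[OF K1 K2 xy] by simp
    qed
  qed
qed

lemma finFF: "finite FF"
proof -
  have "FF \<subseteq> Pow TT" using tree_TT by (auto simp: is_tree_def sgraph_def)
  moreover have "finite TT" using tree_TT by (auto simp: is_tree_def sgraph_def)
  ultimately show ?thesis using finite_subset by blast
qed

lemma ps_all: "x \<in> blocked_V V E \<Longrightarrow> is_path_set TT FF (PS x)"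
  unfolding blocked_V_def using ps_V ps_B ps_E by blast

lemma construct:
  "overlap_path_graph k (blocked_V V E) (blocked_E V E) \<and> intersection_path_graph k (blocked_V V E) (blocked_E V E)"
proof -
  let ?f = "to_nat :: nd \<Rightarrow> nat"
  have inj: "inj ?f" by simp
  have t: "is_tree (?f ` TT) ((`) ?f ` FF)" using transfer_tree[OF inj tree_TT] .
  have d: "max_degree_le k (?f ` TT) ((`) ?f ` FF)"
    using transfer_deg[OF inj _ finFF] nd_deg[OF k3] by (simp add: TT_def FF_def)
  have p: "\<forall>x\<in>blocked_V V E. is_path_set (?f ` TT) ((`) ?f ` FF) (?f ` PS x)"
    using transfer_path[OF inj] ps_all by blast
  have ov: "\<forall>x\<in>blocked_V V E. \<forall>y\<in>blocked_V V E. x \<noteq> y \<longrightarrow>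
      ({x, y} \<in> blocked_E V E \<longleftrightarrow> overlap (?f ` PS x) (?f ` PS y))"
  proof (intro ballI impI)
    fix x y assume xy: "x \<in> blocked_V V E" "y \<in> blocked_V V E" "x \<noteq> y"
    note r = rel[OF xy]
    have "{x, y} \<in> blocked_E V E \<longleftrightarrow> overlap (PS x) (PS y)"
      using r by (auto simp: overlap_def)
    then show "{x, y} \<in> blocked_E V E \<longleftrightarrow> overlap (?f ` PS x) (?f ` PS y)"
      by (simp only: transfer_overlap[OF inj])
  qed
  have it: "\<forall>x\<in>blocked_V V E. \<forall>y\<in>blocked_V V E. x \<noteq> y \<longrightarrow>
      ({x, y} \<in> blocked_E V E \<longleftrightarrow> ?f ` PS x \<inter> ?f ` PS y \<noteq> {})"
  proof (intro ballI impI)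
    fix x y assume xy: "x \<in> blocked_V V E" "y \<in> blocked_V V E" "x \<noteq> y"
    note r = rel[OF xy]
    have "{x, y} \<in> blocked_E V E \<longleftrightarrow> PS x \<inter> PS y \<noteq> {}"
      using r by blast
    then show "{x, y} \<in> blocked_E V E \<longleftrightarrow> ?f ` PS x \<inter> ?f ` PS y \<noteq> {}"
      by (simp only: transfer_int[OF inj])
  qed
  have A: "overlap_path_graph k (blocked_V V E) (blocked_E V E)"
    unfolding overlap_path_graph_def
    apply (rule exI[of _ "?f ` TT"])
    apply (rule exI[of _ "(`) ?f ` FF"])
    apply (rule exI[of _ "\<lambda>x. ?f ` PS x"])
    using t d p ov by blast
  have B: "intersection_path_graph k (blocked_V V E) (blocked_E V E)"
    unfolding intersection_path_graph_def
    apply (rule exI[of _ "?f ` TT"])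
    apply (rule exI[of _ "(`) ?f ` FF"])
    apply (rule exI[of _ "\<lambda>x. ?f ` PS x"])
    using t d p it by blast
  show ?thesis using A B by blast
qed

end

lemma easy:
  assumes k: "k \<ge> 3" and G: "sgraph V E" and col: "colourable k V E"
  shows "overlap_path_graph k (blocked_V V E) (blocked_E V E) \<and> intersection_path_graph k (blocked_V V E) (blocked_E V E)"
proof -
  have "\<exists>c :: 'a \<Rightarrow> nat. (\<forall>v\<in>V. c v < k) \<and> (\<forall>e\<in>E. \<forall>u v. e = {u, v} \<longrightarrow> c u \<noteq> c v)"
    using col by (simp only: colourable_def)
  then obtain c :: "'a \<Rightarrow> nat" where c: "\<forall>v\<in>V. c v < k" "\<forall>e\<in>E. \<forall>u v. e = {u, v} \<longrightarrow> c u \<noteq> c v"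
    by (elim exE conjE)
  have fV: "finite V" using G by (simp add: sgraph_def)
  obtain idx where idx: "bij_betw idx V {0..<card V}" using ex_bij_betw_finite_nat[OF fV] by (elim exE)
  interpret cons V E k c idx
  proof
    show "sgraph V E" by (rule G)
    show "3 \<le> k" by (rule k)
    show "bij_betw idx V {0..<card V}" by (rule idx)
    show "\<And>v. v \<in> V \<Longrightarrow> c v < k" using c(1) by blast
    show "\<And>e u v. e \<in> E \<Longrightarrow> e = {u, v} \<Longrightarrow> c u \<noteq> c v" using c(2) by blast
  qed
  show ?thesis by (rule construct)
qed

theorem lemma11:
  fixes k :: nat and V :: "'a set" and E :: "'a set set"
  assumes "k \<ge> 3" and "sgraph V E" and "k_connected 3 V E"
  shows "(overlap_path_graph k (blocked_V V E) (blocked_E V E) \<longleftrightarrow> colourable k V E)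
       \<and> (intersection_path_graph k (blocked_V V E) (blocked_E V E) \<longleftrightarrow> colourable k V E)"
proof -
  have "card V > 3" using assms(3) by (simp add: k_connected_def)
  then have Vne: "V \<noteq> {}" by auto
  have e: "overlap_path_graph k (blocked_V V E) (blocked_E V E) \<and> intersection_path_graph k (blocked_V V E) (blocked_E V E)"
    if "colourable k V E" using easy[OF assms(1,2) that] .
  show ?thesis using hard_ov[OF assms(2) Vne] hard_int[OF assms(2) Vne] e by blast
qed

end
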